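(* Let $\mathcal{X}$, $\mu$, $\nu$, $\mathcal{P}$, $\mathcal{B}_+(\mathcal{X})$ and $\zeta$ be as in the context. Assume that for some $p>0$ we have $\mathbf{E}L_f^p<1$ and $\mathbf{E}|f(z_0)-z_0|^p<\infty$. Then $\mathbf{E}|\zeta(A)|^p<\infty$ for all $A\in\mathcal{B}_+(\mathcal{X})$.
   Context: Let $\mathcal{G}$ be the space of Lipschitz functions $f:\mathbb{R}\to\mathbb{R}$ with the norm $|f(0)|+L_f$, where $L_f=\sup_{x\neq y}|f(y)-f(x)|/|x-y|$, and its Borel $\sigma$-algebra. Let $\nu$ be a probability measure on $\mathcal{G}$, $f$ a random element with distribution $\nu$, and assume $\mathbf{E}L_f<\infty$, $\mathbf{E}\log L_f<0$ and $\mathbf{E}|f(z_0)-z_0|<\infty$ for a fixed $z_0\in\mathbb{R}$. Let $\mathcal{X}$ be a complete separable metric space with a $\sigma$-finite measure $\mu$, and $\mathcal{B}_+(\mathcal{X})$ the family of Borel sets $A$ with $\mu(A)\in(0,\infty)$. Let $\mathcal{P}$ be a Poisson process on $[0,\infty)\times\mathcal{X}\times\mathcal{G}$ with intensity $\mathrm{Leb}\otimes\mu\otimes\nu$. For $A\in\mathcal{B}_+(\mathcal{X})$, enumerate the points $(t_{k,A},x_{k,A},f_{k,A})$ of $\mathcal{P}$ with $x_{k,A}\in A$ so that $t_{1,A}<t_{2,A}<\cdots$, let $N_A(t)$ be the number of them with $t_{k,A}\le t$, and $\zeta_t(A)=f_{1,A}\circ\cdots\circ f_{N_A(t),A}(z_0)$.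 The a.s. limit $\zeta(A)=\lim_{t\to\infty}\zeta_t(A)$ exists and does not depend on $z_0$. *)

theory Defs
  imports "HOL-Probability.Probability"
begin

definition lip_const :: "(real \<Rightarrow> real) \<Rightarrow> real" where
  "lip_const f = (SUP xy \<in> {(x, y). x \<noteq> (y::real)}. \<bar>f (snd xy) - f (fst xy)\<bar> / \<bar>fst xy - snd xy\<bar>)"

definition G_space :: "(real \<Rightarrow> real) set" where
  "G_space = {f. \<exists>C. C-lipschitz_on UNIV f}"

definition G_dist :: "(real \<Rightarrow> real) \<Rightarrow> (real \<Rightarrow> real) \<Rightarrow> real" where
  "G_dist f g = \<bar>f 0 - g 0\<bar> + lip_const (\<lambda>x. f x - g x)"

definition G_open :: "(real \<Rightarrow> real) set \<Rightarrow> bool" where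
  "G_open U \<longleftrightarrow> U \<subseteq> G_space \<and>
     (\<forall>f\<in>U. \<exists>e>0. \<forall>g\<in>G_space. G_dist f g < e \<longrightarrow> g \<in> U)"

definition G_borel :: "(real \<Rightarrow> real) measure" where
  "G_borel = sigma G_space {U. G_open U}"

definition npoints :: "'a set \<Rightarrow> 'a set \<Rightarrow> enat" where
  "npoints P B = (if finite (P \<inter> B) then enat (card (P \<inter> B)) else \<infinity>)"

definition poisson_process :: "'w measure \<Rightarrow> 'a measure \<Rightarrow> ('w \<Rightarrow> 'a set) \<Rightarrow> bool" where
  "poisson_process M Lam Pts \<longleftrightarrow>
     prob_space M \<and>
     (\<forall>w\<in>space M. Pts w \<subseteq> space Lam) \<and>
     (\<forall>B\<in>sets Lam. (\<lambda>w. npoints (Pts w) B) \<in> measurable M (count_space UNIV)) \<and>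
     (\<forall>B\<in>sets Lam. emeasure Lam B < \<infinity> \<longrightarrow>
        (\<forall>k::nat. measure M {w\<in>space M. npoints (Pts w) B = enat k} =
           exp (- enn2real (emeasure Lam B)) * enn2real (emeasure Lam B) ^ k / fact k)) \<and>
     (\<forall>B\<in>sets Lam. emeasure Lam B = \<infinity> \<longrightarrow>
        (AE w in M. npoints (Pts w) B = \<infinity>)) \<and>
     (\<forall>I (Bs :: nat \<Rightarrow> 'a set). finite I \<longrightarrow> Bs ` I \<subseteq> sets Lam \<longrightarrow> disjoint_family_on Bs I \<longrightarrow>
        prob_space.indep_vars M (\<lambda>_. count_space UNIV) (\<lambda>i w. npoints (Pts w) (Bs i)) I)"

definition points_upto :: "(real \<times> 'x \<times> (real \<Rightarrow> real)) set \<Rightarrow> 'x set \<Rightarrow> real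
     \<Rightarrow> (real \<times> 'x \<times> (real \<Rightarrow> real)) list" where
  "points_upto P A s = sorted_key_list_of_set fst {q \<in> P. fst q \<le> s \<and> fst (snd q) \<in> A}"

definition zeta_t :: "(real \<times> 'x \<times> (real \<Rightarrow> real)) set \<Rightarrow> 'x set \<Rightarrow> real \<Rightarrow> real \<Rightarrow> real" where
  "zeta_t P A z0 s = foldr (\<lambda>q g. snd (snd q) \<circ> g) (points_upto P A s) id z0"

definition zeta :: "(real \<times> 'x \<times> (real \<Rightarrow> real)) set \<Rightarrow> 'x set \<Rightarrow> real \<Rightarrow> real" where
  "zeta P A z0 = Lim at_top (\<lambda>s. zeta_t P A z0 s)"

end

theory Submission
  imports Defs
begin

definition ratio :: "(real \<Rightarrow> real) \<Rightarrow> real \<times> real \<Rightarrow> real" where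
  "ratio f xy = \<bar>f (snd xy) - f (fst xy)\<bar> / \<bar>fst xy - snd xy\<bar>"

definition Dpairs :: "(real \<times> real) set" where "Dpairs = {(x, y). x \<noteq> (y::real)}"

lemma lip_const_alt: "lip_const f = (SUP xy \<in> Dpairs. ratio f xy)"
  unfolding lip_const_def ratio_def Dpairs_def ..

lemma Dpairs_ne: "Dpairs \<noteq> {}"
  unfolding Dpairs_def by (auto intro: exI[of _ "(0,1)"])

lemma G_space_lip: "f \<in> G_space \<Longrightarrow> \<exists>C. C-lipschitz_on UNIV f"
  unfolding G_space_def by auto

lemma ratio_bdd:
  assumes "f \<in> G_space" shows "bdd_above (ratio f ` Dpairs)"
proof -
  obtain C where C: "C-lipschitz_on UNIV f" using G_space_lip[OF assms] by auto
  have "ratio f xy \<le> C" if xyD: "xy \<in> Dpairs" for xy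
  proof -
    obtain x y where xy: "xy = (x,y)" "x \<noteq> y" using xyD unfolding Dpairs_def by (cases xy) auto
    have "\<bar>f y - f x\<bar> \<le> C * \<bar>y - x\<bar>" using lipschitz_onD[OF C, of y x] by (simp add: dist_real_def)
    moreover have "\<bar>x - y\<bar> > 0" using xy by simp
    ultimately show ?thesis unfolding xy ratio_def
      by (simp add: divide_le_eq abs_minus_commute)
  qed
  then show ?thesis by (intro bdd_aboveI2) blast
qed

lemma ratio_le_lip: "f \<in> G_space \<Longrightarrow> xy \<in> Dpairs \<Longrightarrow> ratio f xy \<le> lip_const f"
  unfolding lip_const_alt by (rule cSUP_upper[OF _ ratio_bdd])

lemma lip_nonneg: "f \<in> G_space \<Longrightarrow> 0 \<le> lip_const f"
proof -
  assume f: "f \<in> G_space"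
  have "(0,1) \<in> Dpairs" unfolding Dpairs_def by auto
  moreover have "0 \<le> ratio f (0,1)" by (simp add: ratio_def)
  ultimately show ?thesis using ratio_le_lip[OF f] by (meson order_trans)
qed

lemma lip_le: "f \<in> G_space \<Longrightarrow> \<bar>f y - f x\<bar> \<le> lip_const f * \<bar>y - x\<bar>"
proof (cases "x = y")
  case False
  assume f: "f \<in> G_space"
  have "(x,y) \<in> Dpairs" using False unfolding Dpairs_def by auto
  from ratio_le_lip[OF f this] have "\<bar>f y - f x\<bar> / \<bar>x - y\<bar> \<le> lip_const f" unfolding ratio_def by simp
  moreover have "\<bar>x - y\<bar> > 0" using False by simp
  ultimately show ?thesis by (simp add: divide_le_eq abs_minus_commute mult.commute)
qed simp

lemma G_space_diff: "f \<in> G_space \<Longrightarrow> g \<in> G_space \<Longrightarrow> (\<lambda>x. f x - g x) \<in> G_space"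
  unfolding G_space_def using lipschitz_on_diff by blast

lemma space_G_borel: "space G_borel = G_space"
  unfolding G_borel_def by (rule space_measure_of) (auto simp: G_open_def)

lemma sets_G_borel: "sets G_borel = sigma_sets G_space {U. G_open U}"
  unfolding G_borel_def by (rule sets_measure_of) (auto simp: G_open_def)

lemma G_open_sets: "G_open U \<Longrightarrow> U \<in> sets G_borel"
  unfolding sets_G_borel by auto

lemma lip_meas: "lip_const \<in> borel_measurable G_borel"
proof (subst borel_measurable_iff_greater, intro allI)
  fix a :: real
  have "G_open {w \<in> G_space. a < lip_const w}"
    unfolding G_open_def
  proof (intro conjI ballI)
    fix f assume "f \<in> {w \<in> G_space. a < lip_const w}"
    then have f: "f \<in> G_space" and a: "a < lip_const f" by auto
    obtain xy where xy: "xy \<in> Dpairs" "a < ratio f xy"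
      using a unfolding lip_const_alt using less_cSUP_iff[OF Dpairs_ne ratio_bdd[OF f]] by auto
    show "\<exists>e>0. \<forall>g\<in>G_space. G_dist f g < e \<longrightarrow> g \<in> {w \<in> G_space. a < lip_const w}"
    proof (intro exI[of _ "ratio f xy - a"] conjI ballI impI)
      fix g assume g: "g \<in> G_space" and d: "G_dist f g < ratio f xy - a"
      have fg: "(\<lambda>x. f x - g x) \<in> G_space" by (rule G_space_diff[OF f g])
      have r1: "ratio (\<lambda>x. f x - g x) xy \<le> lip_const (\<lambda>x. f x - g x)" by (rule ratio_le_lip[OF fg xy(1)])
      have "lip_const (\<lambda>x. f x - g x) \<le> G_dist f g" unfolding G_dist_def by simp
      have tri: "ratio f xy \<le> ratio g xy + ratio (\<lambda>x. f x - g x) xy"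
      proof -
        have "\<bar>f (snd xy) - f (fst xy)\<bar> \<le> \<bar>g (snd xy) - g (fst xy)\<bar> + \<bar>(f (snd xy) - g (snd xy)) - (f (fst xy) - g (fst xy))\<bar>"
          by linarith
        then show ?thesis unfolding ratio_def by (simp add: add_divide_distrib[symmetric] divide_right_mono)
      qed
      have "ratio g xy \<le> lip_const g" by (rule ratio_le_lip[OF g xy(1)])
      with tri r1 d \<open>lip_const (\<lambda>x. f x - g x) \<le> G_dist f g\<close> have "a < lip_const g" by linarith
      with g show "g \<in> {w \<in> G_space. a < lip_const w}" by simp
    qed (use xy in simp)
  qed auto
  then show "{w \<in> space G_borel. a < lip_const w} \<in> sets G_borel"
    unfolding space_G_borel by (rule G_open_sets)
qed

lemma eval_meas: "(\<lambda>f. f z) \<in> borel_measurable G_borel"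
proof (rule borel_measurableI)
  fix S :: "real set" assume S: "open S"
  have "G_open ((\<lambda>f. f z) -` S \<inter> G_space)"
    unfolding G_open_def
  proof (intro conjI ballI)
    fix f assume "f \<in> (\<lambda>f. f z) -` S \<inter> G_space"
    then have f: "f \<in> G_space" and fz: "f z \<in> S" by auto
    obtain r where r: "r > 0" "ball (f z) r \<subseteq> S" using S fz open_contains_ball by blast
    define c where "c = max 1 \<bar>z\<bar>"
    have c: "c \<ge> 1" unfolding c_def by simp
    show "\<exists>e>0. \<forall>g\<in>G_space. G_dist f g < e \<longrightarrow> g \<in> (\<lambda>f. f z) -` S \<inter> G_space"
    proof (intro exI[of _ "r / c"] conjI ballI impI)
      show "r / c > 0" using r c by simp
      fix g assume g: "g \<in> G_space" and d: "G_dist f g < r / c"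
      have fg: "(\<lambda>x. f x - g x) \<in> G_space" by (rule G_space_diff[OF f g])
      have l: "\<bar>(f z - g z) - (f 0 - g 0)\<bar> \<le> lip_const (\<lambda>x. f x - g x) * \<bar>z - 0\<bar>"
        using lip_le[OF fg, of z 0] by simp
      have ln: "0 \<le> lip_const (\<lambda>x. f x - g x)" by (rule lip_nonneg[OF fg])
      have "lip_const (\<lambda>x. f x - g x) * \<bar>z\<bar> \<le> lip_const (\<lambda>x. f x - g x) * c"
        using ln unfolding c_def by (intro mult_left_mono) auto
      moreover have "\<bar>f z - g z\<bar> \<le> \<bar>f 0 - g 0\<bar> + \<bar>(f z - g z) - (f 0 - g 0)\<bar>"
        using abs_triangle_ineq[of "f 0 - g 0" "(f z - g z) - (f 0 - g 0)"] by simp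
      ultimately have "\<bar>f z - g z\<bar> \<le> \<bar>f 0 - g 0\<bar> + lip_const (\<lambda>x. f x - g x) * c" using l by simp
      also have "\<dots> \<le> c * G_dist f g"
      proof -
        have "1 * \<bar>f 0 - g 0\<bar> \<le> c * \<bar>f 0 - g 0\<bar>" by (rule mult_right_mono[OF c]) simp
        then show ?thesis unfolding G_dist_def by (simp add: distrib_left mult.commute)
      qed
      also have "\<dots> < r" using d c by (simp add: field_simps)
      finally have "g z \<in> ball (f z) r" by (simp add: dist_real_def)
      with r g show "g \<in> (\<lambda>f. f z) -` S \<inter> G_space" by auto
    qed
  qed auto
  then show "(\<lambda>f. f z) -` S \<inter> space G_borel \<in> sets G_borel"
    unfolding space_G_borel by (rule G_open_sets)
qed

locale ppp =
  fixes M :: "'w measure" and Lam :: "'a measure" and Pts :: "'w \<Rightarrow> 'a set"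
  assumes PP: "poisson_process M Lam Pts"
begin

sublocale prob_space M using PP unfolding poisson_process_def by auto

definition NN :: "'a set \<Rightarrow> 'w \<Rightarrow> enat" where "NN B w = npoints (Pts w) B"

lemma Pts_space: "w \<in> space M \<Longrightarrow> Pts w \<subseteq> space Lam"
  using PP unfolding poisson_process_def by auto

lemma NN_meas: "B \<in> sets Lam \<Longrightarrow> NN B \<in> measurable M (count_space UNIV)"
  using PP unfolding poisson_process_def NN_def by auto

lemma NN_pmf: "B \<in> sets Lam \<Longrightarrow> emeasure Lam B < \<infinity> \<Longrightarrow>
   prob {w\<in>space M. NN B w = enat k} = exp (- measure Lam B) * measure Lam B ^ k / fact k"
  using PP unfolding poisson_process_def NN_def measure_def by auto

lemma NN_indep:
  fixes Bs :: "nat \<Rightarrow> 'a set"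
  assumes "finite I" "Bs ` I \<subseteq> sets Lam" "disjoint_family_on Bs I"
  shows "indep_vars (\<lambda>_. count_space UNIV) (\<lambda>i w. NN (Bs i) w) I"
proof -
  have H: "\<forall>I (Bs :: nat \<Rightarrow> 'a set). finite I \<longrightarrow> Bs ` I \<subseteq> sets Lam \<longrightarrow> disjoint_family_on Bs I \<longrightarrow>
        indep_vars (\<lambda>_. count_space UNIV) (\<lambda>i w. npoints (Pts w) (Bs i)) I"
    using PP unfolding poisson_process_def by (elim conjE) assumption
  show ?thesis unfolding NN_def by (rule H[rule_format]; fact)
qed

lemma set_NN_meas: "B \<in> sets Lam \<Longrightarrow> {w\<in>space M. P (NN B w)} \<in> sets M"
proof -
  assume B: "B \<in> sets Lam"
  have "NN B -` {x. P x} \<inter> space M \<in> sets M"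
    by (rule measurable_sets[OF NN_meas[OF B]]) simp
  moreover have "NN B -` {x. P x} \<inter> space M = {w\<in>space M. P (NN B w)}" by auto
  ultimately show ?thesis by simp
qed

definition phi :: "real \<Rightarrow> enat \<Rightarrow> ennreal" where
  "phi v n = (case n of enat k \<Rightarrow> ennreal (v ^ k) | \<infinity> \<Rightarrow> 0)"

lemma exp_series:
  fixes l v :: real
  shows "(\<lambda>k. v^k * (exp (- l) * l^k / fact k)) sums exp (l * (v - 1))"
proof -
  have 1: "(\<lambda>n. exp (- l) * (inverse (fact n) * (v * l)^n)) sums (exp (- l) * exp (v * l))"
    using sums_mult[OF exp_converges[of "v * l"], of "exp (- l)"] by (simp add: divide_inverse)
  moreover have "exp (- l) * exp (v * l) = exp (l * (v - 1))"
    by (simp add: mult_exp_exp ring_distribs)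
  moreover have "(\<lambda>n. exp (- l) * (inverse (fact n) * (v * l)^n)) = (\<lambda>k. v^k * (exp (- l) * l^k / fact k))"
    by (simp add: fun_eq_iff power_mult_distrib divide_inverse)
  ultimately show ?thesis by simp
qed

lemma E_phi:
  assumes B: "B \<in> sets Lam" and fin: "emeasure Lam B < \<infinity>" and v: "0 \<le> v"
  shows "(\<integral>\<^sup>+w. phi v (NN B w) \<partial>M) = ennreal (exp (measure Lam B * (v - 1)))"
proof -
  define l where "l = measure Lam B"
  define E where "E k = {w\<in>space M. NN B w = enat k}" for k
  have E_sets: "E k \<in> sets M" for k unfolding E_def by (rule set_NN_meas[OF B])
  have eq: "phi v (NN B w) = (\<Sum>k. ennreal (v^k) * indicator (E k) w)" if w: "w \<in> space M" for w
  proof (cases "NN B w")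
    case (enat k0)
    have "(\<Sum>k. ennreal (v^k) * indicator (E k) w) = (\<Sum>k\<in>{k0}. ennreal (v^k) * indicator (E k) w)"
      by (rule suminf_finite) (auto simp: enat w E_def)
    then show ?thesis by (simp add: enat w phi_def E_def)
  next
    case infinity then show ?thesis by (simp add: phi_def E_def)
  qed
  have "(\<integral>\<^sup>+w. phi v (NN B w) \<partial>M) = (\<integral>\<^sup>+w. (\<Sum>k. ennreal (v^k) * indicator (E k) w) \<partial>M)"
    by (rule nn_integral_cong) (simp add: eq)
  also have "\<dots> = (\<Sum>k. \<integral>\<^sup>+w. ennreal (v^k) * indicator (E k) w \<partial>M)"
    by (rule nn_integral_suminf) (intro borel_measurable_times_ennreal borel_measurable_const borel_measurable_indicator E_sets)
  also have "\<dots> = (\<Sum>k. ennreal (v^k * (exp (- l) * l^k / fact k)))"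
  proof (rule suminf_cong)
    fix k
    have "(\<integral>\<^sup>+w. ennreal (v^k) * indicator (E k) w \<partial>M) = ennreal (v^k) * emeasure M (E k)"
      by (rule nn_integral_cmult_indicator[OF E_sets])
    also have "\<dots> = ennreal (v^k) * ennreal (exp (- l) * l^k / fact k)"
      unfolding emeasure_eq_measure E_def NN_pmf[OF B fin] l_def ..
    also have "\<dots> = ennreal (v^k * (exp (- l) * l^k / fact k))"
      using v by (simp add: ennreal_mult'[symmetric] l_def)
    finally show "(\<integral>\<^sup>+w. ennreal (v^k) * indicator (E k) w \<partial>M) = ennreal (v^k * (exp (- l) * l^k / fact k))" .
  qed
  also have "\<dots> = ennreal (\<Sum>k. v^k * (exp (- l) * l^k / fact k))"
    using v sums_summable[OF exp_series[of v l]] measure_nonneg[of Lam B]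
    by (intro suminf_ennreal2) (auto simp: l_def)
  also have "(\<Sum>k. v^k * (exp (- l) * l^k / fact k)) = exp (l * (v - 1))"
    by (rule sums_unique[symmetric, OF exp_series])
  finally show ?thesis unfolding l_def .
qed

lemma AE_fin:
  assumes B: "B \<in> sets Lam" and fin: "emeasure Lam B < \<infinity>"
  shows "AE w in M. NN B w \<noteq> \<infinity>"
proof -
  define S where "S = {w\<in>space M. NN B w \<noteq> \<infinity>}"
  have S: "S \<in> sets M" unfolding S_def by (rule set_NN_meas[OF B])
  have "(\<integral>\<^sup>+w. phi 1 (NN B w) \<partial>M) = 1" using E_phi[OF B fin, of 1] by simp
  moreover have "(\<integral>\<^sup>+w. phi 1 (NN B w) \<partial>M) = (\<integral>\<^sup>+w. indicator S w \<partial>M)"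
    by (rule nn_integral_cong) (auto simp: phi_def S_def split: enat.splits)
  ultimately have "emeasure M S = 1" using S by simp
  then have "prob S = 1" by (simp add: emeasure_eq_measure)
  from AE_prob_1[OF this] show ?thesis by (auto simp: S_def)
qed

end

definition psi :: "real \<Rightarrow> enat \<Rightarrow> real" where
  "psi v n = (case n of enat k \<Rightarrow> v ^ k | \<infinity> \<Rightarrow> 0)"

context ppp begin

definition PF :: "('a \<Rightarrow> real) \<Rightarrow> 'a set \<Rightarrow> 'w \<Rightarrow> real" where
  "PF h B w = (if finite (Pts w \<inter> B) then (\<Prod>q\<in>Pts w \<inter> B. h q) else 0)"

lemma phi_psi: "0 \<le> v \<Longrightarrow> phi v n = ennreal (psi v n)"
  by (simp add: phi_def psi_def split: enat.splits)

lemma core_simple: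
  assumes B: "B \<in> sets Lam" and fin: "emeasure Lam B < \<infinity>"
    and hm: "h \<in> borel_measurable Lam" and h0: "\<And>x. 0 \<le> h x" and hfin: "finite (h ` B)"
    and Hh0: "0 \<le> Hh" and HI: "(\<integral>\<^sup>+x. ennreal (h x) * indicator B x \<partial>Lam) \<le> ennreal Hh"
  shows "PF h B \<in> borel_measurable M \<and> (\<integral>\<^sup>+w. ennreal (PF h B w) \<partial>M) \<le> ennreal (exp (Hh - measure Lam B))"
proof -
  define n where "n = card (h ` B)"
  obtain e where e: "bij_betw e {0..<n} (h ` B)" using ex_bij_betw_nat_finite[OF hfin] n_def by auto
  define I where "I = {0..<n}"
  have finI: "finite I" unfolding I_def by simp
  define C where "C i = B \<inter> (h -` {e i} \<inter> space Lam)" for i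
  have Bsp: "B \<subseteq> space Lam" using B by (rule sets.sets_into_space)
  have C_sets: "C i \<in> sets Lam" for i
    unfolding C_def by (intro sets.Int B measurable_sets[OF hm]) simp
  have C_sub: "C i \<subseteq> B" for i unfolding C_def by auto
  have C_fin: "emeasure Lam (C i) < \<infinity>" for i
    using emeasure_mono[OF C_sub B] fin by (meson le_less_trans)
  have C_fin': "emeasure Lam (C i) \<noteq> top" for i using C_fin[of i] by simp
  have e_inj: "e i = e j \<Longrightarrow> i \<in> I \<Longrightarrow> j \<in> I \<Longrightarrow> i = j" for i j
    using e unfolding bij_betw_def inj_on_def I_def by blast
  have disj: "disjoint_family_on C I"
    unfolding disjoint_family_on_def C_def using e_inj by auto
  have UC: "(\<Union>i\<in>I. C i) = B"
  proof
    show "(\<Union>i\<in>I. C i) \<subseteq> B" using C_sub by auto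
    show "B \<subseteq> (\<Union>i\<in>I. C i)"
    proof
      fix x assume x: "x \<in> B"
      then have "h x \<in> e ` I" using e unfolding bij_betw_def I_def by auto
      then obtain i where "i \<in> I" "h x = e i" by auto
      then show "x \<in> (\<Union>i\<in>I. C i)" using x Bsp unfolding C_def by auto
    qed
  qed
  have e0: "0 \<le> e i" if "i \<in> I" for i
  proof -
    have "e i \<in> h ` B" using e that unfolding bij_betw_def I_def by auto
    then show ?thesis using h0 by auto
  qed
  define l where "l i = measure Lam (C i)" for i
  have sum_l: "(\<Sum>i\<in>I. l i) = measure Lam B"
  proof -
    have "measure Lam (\<Union>i\<in>I. C i) = (\<Sum>i\<in>I. measure Lam (C i))"
      by (rule measure_finite_Union[OF finI _ disj]) (use C_sets C_fin' in auto)
    then show ?thesis unfolding l_def UC by simp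
  qed
  have hI: "(\<integral>\<^sup>+x. ennreal (h x) * indicator B x \<partial>Lam) = ennreal (\<Sum>i\<in>I. e i * l i)"
  proof -
    have pw: "ennreal (h x) * indicator B x = (\<Sum>i\<in>I. ennreal (e i) * indicator (C i) x)" for x
    proof (cases "x \<in> B")
      case True
      then obtain j where j: "j \<in> I" "x \<in> C j" using UC by auto
      then have "h x = e j" unfolding C_def by auto
      then show ?thesis using sum_indicator_disjoint_family[OF disj j(2) finI j(1), of "\<lambda>i. ennreal (e i)"] True by simp
    next
      case False
      then have "x \<notin> C i" for i using C_sub by auto
      then show ?thesis using False by simp
    qed
    have "(\<integral>\<^sup>+x. ennreal (h x) * indicator B x \<partial>Lam) = (\<integral>\<^sup>+x. (\<Sum>i\<in>I. ennreal (e i) * indicator (C i) x) \<partial>Lam)"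
      by (simp add: pw)
    also have "\<dots> = (\<Sum>i\<in>I. \<integral>\<^sup>+x. ennreal (e i) * indicator (C i) x \<partial>Lam)"
      by (rule nn_integral_sum) (intro borel_measurable_times_ennreal borel_measurable_const borel_measurable_indicator C_sets)
    also have "\<dots> = (\<Sum>i\<in>I. ennreal (e i) * emeasure Lam (C i))"
      by (simp add: nn_integral_cmult_indicator[OF C_sets])
    also have "\<dots> = (\<Sum>i\<in>I. ennreal (e i * l i))"
      using C_fin' e0 by (intro sum.cong refl) (simp add: l_def emeasure_eq_ennreal_measure[OF C_fin'] ennreal_mult'' measure_nonneg)
    also have "\<dots> = ennreal (\<Sum>i\<in>I. e i * l i)"
      using e0 by (intro sum_ennreal) (simp add: l_def measure_nonneg)
    finally show ?thesis .
  qed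
  have sumle: "(\<Sum>i\<in>I. e i * l i) \<le> Hh"
    using HI Hh0 unfolding hI by (simp add: ennreal_le_iff)
  have rep: "PF h B w = (\<Prod>i\<in>I. psi (e i) (NN (C i) w))" if w: "w \<in> space M" for w
  proof (cases "finite (Pts w \<inter> B)")
    case True
    have finCi: "finite (Pts w \<inter> C i)" for i using True C_sub by (meson finite_subset inf_mono order_refl)
    have NNi: "NN (C i) w = enat (card (Pts w \<inter> C i))" for i using finCi by (simp add: NN_def npoints_def)
    have eqU: "Pts w \<inter> B = (\<Union>i\<in>I. Pts w \<inter> C i)" using UC by auto
    have "(\<Prod>q\<in>Pts w \<inter> B. h q) = (\<Prod>q\<in>(\<Union>i\<in>I. Pts w \<inter> C i). h q)"
      by (simp only: eqU)
    also have "\<dots> = (\<Prod>i\<in>I. \<Prod>q\<in>Pts w \<inter> C i. h q)"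
      by (rule prod.UNION_disjoint) (use finI finCi disj in \<open>auto simp: disjoint_family_on_def\<close>)
    also have "\<dots> = (\<Prod>i\<in>I. e i ^ card (Pts w \<inter> C i))"
      by (intro prod.cong refl) (simp add: C_def)
    finally show ?thesis using True by (simp add: PF_def NNi psi_def)
  next
    case False
    have "\<exists>i\<in>I. infinite (Pts w \<inter> C i)"
    proof (rule ccontr)
      assume "\<not> ?thesis"
      then have "finite (\<Union>i\<in>I. Pts w \<inter> C i)" using finI by (intro finite_UN_I) auto
      moreover have "Pts w \<inter> B = (\<Union>i\<in>I. Pts w \<inter> C i)" using UC by auto
      ultimately show False using False by simp
    qed
    then obtain i where i: "i \<in> I" "infinite (Pts w \<inter> C i)" by auto
    then have "psi (e i) (NN (C i) w) = 0" by (simp add: NN_def npoints_def psi_def)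
    then have "(\<Prod>i\<in>I. psi (e i) (NN (C i) w)) = 0" using i finI by (intro prod_zero) auto
    then show ?thesis using False by (simp add: PF_def)
  qed
  have psim: "(\<lambda>w. psi (e i) (NN (C i) w)) \<in> borel_measurable M" for i
    by (rule measurable_compose[OF NN_meas[OF C_sets]]) simp
  have meas: "PF h B \<in> borel_measurable M"
  proof -
    have "(\<lambda>w. \<Prod>i\<in>I. psi (e i) (NN (C i) w)) \<in> borel_measurable M"
      by (intro borel_measurable_prod psim)
    then show ?thesis by (rule measurable_cong[THEN iffD1, rotated]) (simp add: rep)
  qed
  have indep: "indep_vars (\<lambda>_. borel) (\<lambda>i w. phi (e i) (NN (C i) w)) I"
    by (rule indep_vars_compose2[OF NN_indep[OF finI _ disj]]) (auto simp: C_sets)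
  have "(\<integral>\<^sup>+w. ennreal (PF h B w) \<partial>M) = (\<integral>\<^sup>+w. (\<Prod>i\<in>I. phi (e i) (NN (C i) w)) \<partial>M)"
  proof (rule nn_integral_cong)
    fix w assume "w \<in> space M"
    then have "ennreal (PF h B w) = ennreal (\<Prod>i\<in>I. psi (e i) (NN (C i) w))" by (simp add: rep)
    also have "\<dots> = (\<Prod>i\<in>I. ennreal (psi (e i) (NN (C i) w)))"
      using e0 by (intro prod_ennreal[symmetric]) (auto simp: psi_def split: enat.splits)
    also have "\<dots> = (\<Prod>i\<in>I. phi (e i) (NN (C i) w))"
      using e0 by (intro prod.cong refl) (simp add: phi_psi)
    finally show "ennreal (PF h B w) = (\<Prod>i\<in>I. phi (e i) (NN (C i) w))" .
  qed
  also have "\<dots> = (\<Prod>i\<in>I. \<integral>\<^sup>+w. phi (e i) (NN (C i) w) \<partial>M)"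
    by (rule indep_vars_nn_integral[OF finI indep]) simp
  also have "\<dots> = (\<Prod>i\<in>I. ennreal (exp (l i * (e i - 1))))"
    using e0 by (intro prod.cong refl) (simp add: E_phi[OF C_sets C_fin] l_def)
  also have "\<dots> = ennreal (\<Prod>i\<in>I. exp (l i * (e i - 1)))"
    by (rule prod_ennreal) simp
  also have "(\<Prod>i\<in>I. exp (l i * (e i - 1))) = exp (\<Sum>i\<in>I. l i * (e i - 1))"
    by (rule exp_sum[OF finI, symmetric])
  also have "(\<Sum>i\<in>I. l i * (e i - 1)) = (\<Sum>i\<in>I. e i * l i) - measure Lam B"
    unfolding sum_l[symmetric] by (simp add: algebra_simps sum_subtractf)
  also have "ennreal (exp (\<dots>)) \<le> ennreal (exp (Hh - measure Lam B))"
    using sumle by (intro ennreal_leI) simp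
  finally show ?thesis using meas by simp
qed

end

context ppp begin

lemma core:
  assumes B: "B \<in> sets Lam" and fin: "emeasure Lam B < \<infinity>"
    and hm: "h \<in> borel_measurable Lam" and h0: "\<And>x. 0 \<le> h x"
    and Hh0: "0 \<le> Hh" and HI: "(\<integral>\<^sup>+x. ennreal (h x) * indicator B x \<partial>Lam) \<le> ennreal Hh"
  shows "PF h B \<in> borel_measurable M \<and> (\<integral>\<^sup>+w. ennreal (PF h B w) \<partial>M) \<le> ennreal (exp (Hh - measure Lam B))"
proof -
  have hm': "(\<lambda>x. ennreal (h x)) \<in> borel_measurable Lam" using hm by measurable
  obtain f where fs: "\<And>i. simple_function Lam (f i)" and finc: "incseq f"
    and ftop: "\<And>i x. f i x < top" and fsup: "\<And>x. (SUP i. f i x) = ennreal (h x)"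
    using borel_measurable_implies_simple_function_sequence'[OF hm'] by metis
  define hi where "hi i x = enn2real (f i x)" for i x
  have fle: "f i x \<le> ennreal (h x)" for i x using fsup[of x] by (metis SUP_upper UNIV_I)
  have hi_eq: "ennreal (hi i x) = f i x" for i x using ftop[of i x] by (simp add: hi_def less_top)
  have hi0: "0 \<le> hi i x" for i x by (simp add: hi_def)
  have hi_le: "hi i x \<le> h x" for i x using fle[of i x] hi_eq[of i x] h0[of x] by (metis ennreal_le_iff)
  have him: "hi i \<in> borel_measurable Lam" for i
    unfolding hi_def using borel_measurable_simple_function[OF fs] by measurable
  have Bsp: "B \<subseteq> space Lam" using B by (rule sets.sets_into_space)
  have hifin: "finite (hi i ` B)" for i
  proof -
    have "hi i ` B \<subseteq> enn2real ` (f i ` space Lam)" using Bsp by (auto simp: hi_def)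
    moreover have "finite (enn2real ` (f i ` space Lam))" using simple_functionD(1)[OF fs] by simp
    ultimately show ?thesis by (rule finite_subset)
  qed
  have hiI: "(\<integral>\<^sup>+x. ennreal (hi i x) * indicator B x \<partial>Lam) \<le> ennreal Hh" for i
  proof -
    have "(\<integral>\<^sup>+x. ennreal (hi i x) * indicator B x \<partial>Lam) \<le> (\<integral>\<^sup>+x. ennreal (h x) * indicator B x \<partial>Lam)"
      by (intro nn_integral_mono mult_right_mono) (auto simp: hi_le ennreal_leI)
    then show ?thesis using HI by simp
  qed
  have cs: "PF (hi i) B \<in> borel_measurable M \<and> (\<integral>\<^sup>+w. ennreal (PF (hi i) B w) \<partial>M) \<le> ennreal (exp (Hh - measure Lam B))" for i
    by (rule core_simple[OF B fin him hi0 hifin Hh0 hiI])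
  have hi_lim: "(\<lambda>i. hi i x) \<longlonglongrightarrow> h x" for x
  proof -
    have "incseq (\<lambda>i. f i x)" using finc by (simp add: incseq_def le_fun_def)
    then have "(\<lambda>i. f i x) \<longlonglongrightarrow> ennreal (h x)" using LIMSEQ_SUP fsup by metis
    then show ?thesis unfolding hi_def by (rule tendsto_enn2real) (rule h0)
  qed
  have PF_lim: "(\<lambda>i. PF (hi i) B w) \<longlonglongrightarrow> PF h B w" for w
  proof (cases "finite (Pts w \<inter> B)")
    case True
    then show ?thesis unfolding PF_def using True by (simp add: tendsto_prod hi_lim)
  next
    case False
    then show ?thesis unfolding PF_def by simp
  qed
  have meas: "PF h B \<in> borel_measurable M"
    by (rule borel_measurable_LIMSEQ_real[OF PF_lim]) (rule cs[THEN conjunct1])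
  have "(\<integral>\<^sup>+w. ennreal (PF h B w) \<partial>M) = (\<integral>\<^sup>+w. liminf (\<lambda>i. ennreal (PF (hi i) B w)) \<partial>M)"
  proof (rule nn_integral_cong)
    fix w
    have "(\<lambda>i. ennreal (PF (hi i) B w)) \<longlonglongrightarrow> ennreal (PF h B w)"
      by (rule tendsto_ennrealI[OF PF_lim])
    then show "ennreal (PF h B w) = liminf (\<lambda>i. ennreal (PF (hi i) B w))"
      by (simp add: lim_imp_Liminf)
  qed
  also have "\<dots> \<le> liminf (\<lambda>i. \<integral>\<^sup>+w. ennreal (PF (hi i) B w) \<partial>M)"
    by (rule nn_integral_liminf) (rule measurable_compose[OF cs[THEN conjunct1]], simp)
  also have "\<dots> \<le> limsup (\<lambda>i. \<integral>\<^sup>+w. ennreal (PF (hi i) B w) \<partial>M)"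
    by (rule Liminf_le_Limsup) simp
  also have "\<dots> \<le> ennreal (exp (Hh - measure Lam B))"
    by (rule Limsup_bounded, rule always_eventually) (use cs in blast)
  finally show ?thesis using meas by simp
qed

end

abbreviation LamM :: "'x measure \<Rightarrow> (real \<Rightarrow> real) measure \<Rightarrow> (real \<times> 'x \<times> (real \<Rightarrow> real)) measure" where
  "LamM \<mu> \<nu> \<equiv> restrict_space lborel {0..} \<Otimes>\<^sub>M (\<mu> \<Otimes>\<^sub>M \<nu>)"

locale sett = ppp M "LamM \<mu> \<nu>" Pts
  for M :: "'w measure" and \<mu> :: "'x measure" and \<nu> :: "(real \<Rightarrow> real) measure" and Pts +
  fixes A :: "'x set"
  assumes nu_prob: "prob_space \<nu>" and nu_space: "space \<nu> = G_space" and nu_sets: "sets \<nu> = sets G_borel"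
    and mu_sf: "sigma_finite_measure \<mu>" and A_sets: "A \<in> sets \<mu>"
    and A_fin: "emeasure \<mu> A < \<infinity>"
begin

abbreviation "Lam \<equiv> LamM \<mu> \<nu>"

definition R :: "real \<Rightarrow> real \<Rightarrow> (real \<times> 'x \<times> (real \<Rightarrow> real)) set" where
  "R a b = {q \<in> space Lam. a \<le> fst q \<and> fst q < b \<and> fst (snd q) \<in> A}"

lemma lip_nu[measurable]: "lip_const \<in> borel_measurable \<nu>"
  using lip_meas measurable_cong_sets[OF nu_sets refl] by blast

lemma eval_nu[measurable]: "(\<lambda>f. f z) \<in> borel_measurable \<nu>"
  using eval_meas measurable_cong_sets[OF nu_sets refl] by blast

lemma fst_meas[measurable]: "fst \<in> borel_measurable Lam"
proof -
  have "fst \<in> measurable Lam (restrict_space lborel {0..})" by (rule measurable_fst)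
  moreover have "(\<lambda>x. x) \<in> measurable (restrict_space lborel {0::real..}) borel"
    by (rule measurable_restrict_space1) simp
  ultimately show ?thesis using measurable_compose by fastforce
qed

lemma A_sets'[measurable]: "A \<in> sets \<mu>" by (rule A_sets)

lemma R_sets[measurable]: "R a b \<in> sets Lam"
proof -
  have "R a b = {q \<in> space Lam. a \<le> fst q \<and> fst q < b \<and> fst (snd q) \<in> A}" by (simp add: R_def)
  also have "\<dots> \<in> sets Lam" by measurable
  finally show ?thesis .
qed

lemma space_Lam: "space Lam = {0..} \<times> space \<mu> \<times> G_space"
  by (simp add: space_pair_measure space_restrict_space nu_space)

lemma sf1: "sigma_finite_measure (restrict_space lborel {0::real..})"
  by (rule sigma_finite_measure_restrict_space[OF sigma_finite_lborel]) simp

lemma sf2: "sigma_finite_measure (\<mu> \<Otimes>\<^sub>M \<nu>)"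
  by (rule sigma_finite_pair_measure[OF mu_sf]) (use nu_prob in \<open>simp add: prob_space_imp_sigma_finite\<close>)

lemma region_integral:
  assumes \<phi>m: "\<phi> \<in> borel_measurable \<nu>" and ab: "0 \<le> a" "a \<le> b"
  shows "(\<integral>\<^sup>+q. \<phi> (snd (snd q)) * indicator (R a b) q \<partial>Lam)
          = ennreal (b - a) * emeasure \<mu> A * (\<integral>\<^sup>+f. \<phi> f \<partial>\<nu>)"
proof -
  interpret M2: sigma_finite_measure "\<mu> \<Otimes>\<^sub>M \<nu>" by (rule sf2)
  interpret N: sigma_finite_measure \<nu> using nu_prob by (simp add: prob_space_imp_sigma_finite)
  define K where "K = emeasure \<mu> A * (\<integral>\<^sup>+f. \<phi> f \<partial>\<nu>)"
  note \<phi>m[measurable]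
  have m1: "(\<lambda>q. indicator {a..<b} (fst q) * (indicator A (fst (snd q)) * \<phi> (snd (snd q)))) \<in> borel_measurable Lam"
    by measurable
  have m2: "(\<lambda>y. indicator A (fst y) * \<phi> (snd y)) \<in> borel_measurable (\<mu> \<Otimes>\<^sub>M \<nu>)"
    by measurable
  have ind: "\<phi> (snd (snd q)) * indicator (R a b) q
      = indicator {a..<b} (fst q) * (indicator A (fst (snd q)) * \<phi> (snd (snd q)))" if "q \<in> space Lam" for q
    using that by (auto simp: R_def indicator_def)
  have "(\<integral>\<^sup>+q. \<phi> (snd (snd q)) * indicator (R a b) q \<partial>Lam)
      = (\<integral>\<^sup>+q. indicator {a..<b} (fst q) * (indicator A (fst (snd q)) * \<phi> (snd (snd q))) \<partial>Lam)"
    by (rule nn_integral_cong) (simp add: ind)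
  also have "\<dots> = (\<integral>\<^sup>+t. \<integral>\<^sup>+y. indicator {a..<b} t * (indicator A (fst y) * \<phi> (snd y)) \<partial>(\<mu> \<Otimes>\<^sub>M \<nu>) \<partial>restrict_space lborel {0..})"
    by (subst M2.nn_integral_fst[symmetric, OF m1]) simp
  also have "\<dots> = (\<integral>\<^sup>+t. indicator {a..<b} t * K \<partial>restrict_space lborel {0..})"
  proof (rule nn_integral_cong)
    fix t :: real
    have "(\<integral>\<^sup>+y. indicator A (fst y) * \<phi> (snd y) \<partial>(\<mu> \<Otimes>\<^sub>M \<nu>)) = (\<integral>\<^sup>+x. \<integral>\<^sup>+f. indicator A x * \<phi> f \<partial>\<nu> \<partial>\<mu>)"
      by (subst N.nn_integral_fst[symmetric, OF m2]) simp
    also have "\<dots> = (\<integral>\<^sup>+x. indicator A x * (\<integral>\<^sup>+f. \<phi> f \<partial>\<nu>) \<partial>\<mu>)"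
      by (simp add: nn_integral_cmult)
    also have "\<dots> = (\<integral>\<^sup>+x. (\<integral>\<^sup>+f. \<phi> f \<partial>\<nu>) * indicator A x \<partial>\<mu>)"
      by (simp add: mult.commute)
    also have "\<dots> = (\<integral>\<^sup>+f. \<phi> f \<partial>\<nu>) * emeasure \<mu> A"
      by (rule nn_integral_cmult_indicator[OF A_sets])
    also have "\<dots> = K" unfolding K_def by (rule mult.commute)
    finally show "(\<integral>\<^sup>+y. indicator {a..<b} t * (indicator A (fst y) * \<phi> (snd y)) \<partial>(\<mu> \<Otimes>\<^sub>M \<nu>)) = indicator {a..<b} t * K"
      by (simp add: nn_integral_cmult)
  qed
  also have "\<dots> = K * emeasure (restrict_space lborel {0..}) {a..<b}"
  proof -
    have Is: "{a..<b} \<in> sets (restrict_space lborel {0..})"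
      using ab by (subst sets_restrict_space_iff) auto
    have "(\<integral>\<^sup>+t. indicator {a..<b} t * K \<partial>restrict_space lborel {0..}) = (\<integral>\<^sup>+t. K * indicator {a..<b} t \<partial>restrict_space lborel {0..})"
      by (simp only: mult.commute)
    also have "\<dots> = K * emeasure (restrict_space lborel {0..}) {a..<b}"
      by (rule nn_integral_cmult_indicator[OF Is])
    finally show ?thesis .
  qed
  also have "emeasure (restrict_space lborel {0..}) {a..<b} = ennreal (b - a)"
    using ab by (subst emeasure_restrict_space) auto
  finally show ?thesis unfolding K_def by (simp add: ac_simps)
qed

end

context sett begin

definition lam :: real where "lam = measure \<mu> A"

lemma lam0: "0 \<le> lam" unfolding lam_def by (rule measure_nonneg)

lemma emu_A: "emeasure \<mu> A = ennreal lam"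
  unfolding lam_def using A_fin by (intro emeasure_eq_ennreal_measure) simp

lemma R_emeasure:
  assumes "0 \<le> a" "a \<le> b" shows "emeasure Lam (R a b) = ennreal ((b - a) * lam)"
proof -
  have "emeasure Lam (R a b) = (\<integral>\<^sup>+q. (\<lambda>_. 1) (snd (snd q)) * indicator (R a b) q \<partial>Lam)"
    by (simp add: R_sets)
  also have "\<dots> = ennreal (b - a) * emeasure \<mu> A * (\<integral>\<^sup>+f. 1 \<partial>\<nu>)"
    by (rule region_integral[OF _ assms]) simp
  also have "(\<integral>\<^sup>+f. 1 \<partial>\<nu>) = 1" using prob_space.emeasure_space_1[OF nu_prob] by simp
  finally show ?thesis using assms lam0 by (simp add: emu_A ennreal_mult)
qed

lemma R_fin: "0 \<le> a \<Longrightarrow> a \<le> b \<Longrightarrow> emeasure Lam (R a b) < \<infinity>"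
  by (simp add: R_emeasure)

lemma R_measure: "0 \<le> a \<Longrightarrow> a \<le> b \<Longrightarrow> measure Lam (R a b) = (b - a) * lam"
  using R_emeasure lam0 by (simp add: measure_def)

lemma NN_fin_iff: "NN B w \<noteq> \<infinity> \<longleftrightarrow> finite (Pts w \<inter> B)"
  by (simp add: NN_def npoints_def)

lemma AE_fin_all: "AE w in M. \<forall>m::nat. finite (Pts w \<inter> R 0 m)"
proof (subst AE_all_countable, intro allI)
  fix m :: nat
  show "AE w in M. finite (Pts w \<inter> R 0 m)"
  proof -
    have fin: "emeasure Lam (R 0 (real m)) < \<infinity>" by (rule R_fin) auto
    show ?thesis using AE_fin[OF R_sets fin]
  proof eventually_elim
    case (elim w) then show ?case by (simp only: NN_fin_iff)
  qed
  qed
qed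

lemma prob_ge2:
  assumes "0 \<le> a" "a \<le> b"
  shows "prob {w\<in>space M. NN (R a b) w \<noteq> enat 0 \<and> NN (R a b) w \<noteq> enat 1} \<le> ((b - a) * lam)^2"
proof -
  define d where "d = (b - a) * lam"
  have d0: "0 \<le> d" using assms lam0 unfolding d_def by simp
  define S0 where "S0 = {w\<in>space M. NN (R a b) w = enat 0}"
  define S1 where "S1 = {w\<in>space M. NN (R a b) w = enat 1}"
  define S2 where "S2 = {w\<in>space M. NN (R a b) w \<noteq> enat 0 \<and> NN (R a b) w \<noteq> enat 1}"
  have s: "S0 \<in> sets M" "S1 \<in> sets M" "S2 \<in> sets M" unfolding S0_def S1_def S2_def by (rule set_NN_meas[OF R_sets])+
  have U: "space M = (S0 \<union> S1) \<union> S2" unfolding S0_def S1_def S2_def by auto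
  have "1 = prob ((S0 \<union> S1) \<union> S2)" using prob_space U by simp
  also have "\<dots> = prob S0 + prob S1 + prob S2"
    using s by (subst finite_measure_Union; (auto simp: S0_def S1_def S2_def)?)+
  finally have eq: "prob S2 = 1 - prob S0 - prob S1" by simp
  have p0: "prob S0 = exp (- d)" unfolding S0_def
    using NN_pmf[OF R_sets R_fin[OF assms], of 0] R_measure[OF assms] by (simp add: d_def)
  have p1: "prob S1 = exp (- d) * d" unfolding S1_def
    using NN_pmf[OF R_sets R_fin[OF assms], of 1] R_measure[OF assms] by (simp add: d_def)
  have "1 - d \<le> exp (- d)" using exp_ge_add_one_self[of "- d"] by simp
  then have "(1 - d) * (1 + d) \<le> exp (- d) * (1 + d)" using d0 by (intro mult_right_mono) auto
  then have "prob S2 \<le> d^2" unfolding eq p0 p1 by (simp add: algebra_simps power2_eq_square)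
  then show ?thesis unfolding S2_def d_def .
qed

lemma noties: "AE w in M. inj_on fst (Pts w \<inter> R 0 (real m))"
proof -
  define J where "J n j = R (real j / real n) (real (Suc j) / real n)" for n j :: nat
  define E where "E n = (\<Union>j<m*n. {w\<in>space M. NN (J n j) w \<noteq> enat 0 \<and> NN (J n j) w \<noteq> enat 1})" for n
  have E_sets: "E n \<in> sets M" for n
    unfolding E_def J_def by (intro sets.finite_UN finite_lessThan set_NN_meas[OF R_sets])
  have probE: "prob (E n) \<le> real m * lam^2 / real n" if n: "n \<ge> 1" for n
  proof -
    have "prob (E n) \<le> (\<Sum>j<m*n. prob {w\<in>space M. NN (J n j) w \<noteq> enat 0 \<and> NN (J n j) w \<noteq> enat 1})"
      unfolding E_def by (rule measure_UNION_le) (auto intro: set_NN_meas[OF R_sets] simp: J_def)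
    also have "\<dots> \<le> (\<Sum>j<m*n. (lam / real n)^2)"
    proof (rule sum_mono)
      fix j
      have "prob {w\<in>space M. NN (J n j) w \<noteq> enat 0 \<and> NN (J n j) w \<noteq> enat 1}
          \<le> ((real (Suc j) / real n - real j / real n) * lam)^2"
        unfolding J_def by (rule prob_ge2) (use n in \<open>auto simp: divide_right_mono\<close>)
      also have "(real (Suc j) / real n - real j / real n) = 1 / real n" by (simp add: diff_divide_distrib[symmetric])
      finally show "prob {w\<in>space M. NN (J n j) w \<noteq> enat 0 \<and> NN (J n j) w \<noteq> enat 1} \<le> (lam / real n)^2" by simp
    qed
    also have "\<dots> = real m * lam^2 / real n" using n by (simp add: power2_eq_square field_simps)
    finally show ?thesis .
  qed
  have sub: "{w\<in>space M. \<not> inj_on fst (Pts w \<inter> R 0 (real m))} \<subseteq> E n" if n: "n \<ge> 1" for n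
  proof
    fix w assume "w \<in> {w\<in>space M. \<not> inj_on fst (Pts w \<inter> R 0 (real m))}"
    then have w: "w \<in> space M" and ni: "\<not> inj_on fst (Pts w \<inter> R 0 (real m))" by auto
    obtain q q' where qq: "q \<in> Pts w \<inter> R 0 (real m)" "q' \<in> Pts w \<inter> R 0 (real m)" "q \<noteq> q'" "fst q = fst q'"
      using ni unfolding inj_on_def by blast
    define t where "t = fst q"
    have t: "0 \<le> t" "t < real m" using qq(1) unfolding R_def t_def by auto
    define j where "j = nat \<lfloor>t * real n\<rfloor>"
    have nn: "real n > 0" using n by simp
    have fl: "real j = of_int \<lfloor>t * real n\<rfloor>" unfolding j_def using t nn by simp
    have j1: "real j / real n \<le> t" using fl nn by (simp add: divide_le_eq)
    have j2: "t < real (Suc j) / real n" using fl nn by (simp add: less_divide_eq) linarith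
    have "\<lfloor>t * real n\<rfloor> < int (m * n)"
    proof -
      have "t * real n < real m * real n" using t nn by simp
      then show ?thesis by (simp add: floor_less_iff)
    qed
    moreover have "0 \<le> \<lfloor>t * real n\<rfloor>" using t nn by simp
    ultimately have jlt: "j < m * n" unfolding j_def by (simp add: nat_less_iff)
    have inJ: "q \<in> J n j" "q' \<in> J n j"
      using qq j1 j2 unfolding J_def R_def t_def by auto
    have "NN (J n j) w \<noteq> enat 0 \<and> NN (J n j) w \<noteq> enat 1"
    proof (cases "finite (Pts w \<inter> J n j)")
      case True
      have "{q, q'} \<subseteq> Pts w \<inter> J n j" using inJ qq by auto
      then have "card {q, q'} \<le> card (Pts w \<inter> J n j)" using True by (rule card_mono[rotated])
      then have "2 \<le> card (Pts w \<inter> J n j)" using qq(3) by simp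
      then show ?thesis using True by (auto simp: NN_def npoints_def)
    next
      case False then show ?thesis by (simp add: NN_def npoints_def)
    qed
    then show "w \<in> E n" unfolding E_def using jlt w by blast
  qed
  define Z where "Z = (\<Inter>n\<in>{1..}. E n)"
  have Z_sets: "Z \<in> sets M" unfolding Z_def by (intro sets.countable_INT') (auto simp: E_sets)
  have "prob Z \<le> 0"
  proof (rule field_le_epsilon)
    fix e :: real assume e: "0 < e"
    obtain n :: nat where n: "real m * lam^2 / e < real n" using reals_Archimedean2 by blast
    define n' where "n' = max n 1"
    have n': "n' \<ge> 1" "real m * lam^2 / e < real n'" using n unfolding n'_def by auto
    have "prob Z \<le> prob (E n')" unfolding Z_def
      by (rule finite_measure_mono) (use n' E_sets in auto)
    also have "\<dots> \<le> real m * lam^2 / real n'" by (rule probE[OF n'(1)])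
    also have "\<dots> \<le> e" using n' e by (simp add: field_simps)
    finally show "prob Z \<le> 0 + e" by simp
  qed
  then have "Z \<in> null_sets M" using Z_sets measure_nonneg[of M Z]
    by (simp add: null_sets_def emeasure_eq_measure)
  moreover have "{w\<in>space M. \<not> inj_on fst (Pts w \<inter> R 0 (real m))} \<subseteq> Z"
    unfolding Z_def using sub by blast
  ultimately show ?thesis by (rule AE_I')
qed

lemma AE_good: "AE w in M. \<forall>m::nat. finite (Pts w \<inter> R 0 m) \<and> inj_on fst (Pts w \<inter> R 0 m)"
  using AE_fin_all noties by (simp add: AE_all_countable AE_conj_iff)

end

fun bnd :: "('q \<Rightarrow> real) \<Rightarrow> ('q \<Rightarrow> real) \<Rightarrow> 'q list \<Rightarrow> real" where
  "bnd L b [] = 0"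
| "bnd L b (q # qs) = b q + L q * bnd L b qs"

lemma comp_bound:
  assumes "\<forall>q\<in>set xs. F q \<in> G_space"
  shows "\<bar>foldr (\<lambda>q g. F q \<circ> g) xs id z - z\<bar> \<le> bnd (\<lambda>q. lip_const (F q)) (\<lambda>q. \<bar>F q z - z\<bar>) xs"
  using assms
proof (induction xs)
  case Nil then show ?case by simp
next
  case (Cons q qs)
  define X where "X = foldr (\<lambda>q g. F q \<circ> g) qs id z"
  have Fq: "F q \<in> G_space" using Cons.prems by simp
  have IH: "\<bar>X - z\<bar> \<le> bnd (\<lambda>q. lip_const (F q)) (\<lambda>q. \<bar>F q z - z\<bar>) qs"
    unfolding X_def by (rule Cons.IH) (use Cons.prems in simp)
  have a1: "\<bar>F q X - z\<bar> \<le> \<bar>F q X - F q z\<bar> + \<bar>F q z - z\<bar>" by linarith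
  have a2: "\<bar>F q X - F q z\<bar> \<le> lip_const (F q) * \<bar>X - z\<bar>" using lip_le[OF Fq, of z X] by (simp add: abs_minus_commute)
  have a3: "lip_const (F q) * \<bar>X - z\<bar> \<le> lip_const (F q) * bnd (\<lambda>q. lip_const (F q)) (\<lambda>q. \<bar>F q z - z\<bar>) qs"
    by (rule mult_left_mono[OF IH lip_nonneg[OF Fq]])
  have fin: "\<bar>F q X - z\<bar> \<le> lip_const (F q) * bnd (\<lambda>q. lip_const (F q)) (\<lambda>q. \<bar>F q z - z\<bar>) qs + \<bar>F q z - z\<bar>"
    using a1 a2 a3 by linarith
  have e1: "foldr (\<lambda>q g. F q \<circ> g) (q # qs) id z = F q X" unfolding X_def by simp
  have e2: "bnd (\<lambda>q. lip_const (F q)) (\<lambda>q. \<bar>F q z - z\<bar>) (q # qs) = \<bar>F q z - z\<bar> + lip_const (F q) * bnd (\<lambda>q. lip_const (F q)) (\<lambda>q. \<bar>F q z - z\<bar>) qs"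
    by simp
  show ?case unfolding e1 e2 using fin by linarith
qed

lemma arith1:
  fixes L b Z :: real
  assumes "0 \<le> L" "0 \<le> b" "1 \<le> Z"
  shows "L * (Z - 1) + b \<le> (max 1 L + b) * Z - 1"
proof (cases "L \<le> 1")
  case True
  have f1: "0 \<le> (1 - L) * (Z - 1)" using True assms by simp
  have f2: "0 \<le> b * (Z - 1)" using assms by simp
  have e1: "(1 - L) * (Z - 1) = Z - 1 - L*Z + L" by (simp add: algebra_simps)
  have e2: "b * (Z - 1) = b*Z - b" by (simp add: algebra_simps)
  have e3: "(max 1 L + b) * Z - 1 = Z + b*Z - 1" using True by (simp add: algebra_simps max_def)
  have e4: "L * (Z - 1) + b = L*Z - L + b" by (simp add: algebra_simps)
  show ?thesis unfolding e3 e4 using f1 f2 e1 e2 by linarith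
next
  case False
  have f2: "0 \<le> b * (Z - 1)" using assms by simp
  have e2: "b * (Z - 1) = b*Z - b" by (simp add: algebra_simps)
  have e3: "(max 1 L + b) * Z - 1 = L*Z + b*Z - 1" using False by (simp add: algebra_simps max_def)
  have e4: "L * (Z - 1) + b = L*Z - L + b" by (simp add: algebra_simps)
  show ?thesis unfolding e3 e4 using f2 e2 False by linarith
qed

definition iota :: "real \<Rightarrow> nat" where "iota x = nat \<lfloor>x\<rfloor>"

definition aterm :: "('q \<Rightarrow> real) \<Rightarrow> ('q \<Rightarrow> real) \<Rightarrow> ('q \<Rightarrow> real) \<Rightarrow> 'q set \<Rightarrow> nat \<Rightarrow> real" where
  "aterm t L b P m = (\<Prod>q\<in>{q\<in>P. iota (t q) < m}. L q) * ((\<Prod>q\<in>{q\<in>P. iota (t q) = m}. max 1 (L q) + b q) - 1)"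

lemma aterm_nonneg:
  assumes "\<forall>q\<in>P. 0 \<le> L q \<and> 0 \<le> b q"
  shows "0 \<le> aterm t L b P m"
proof -
  have "0 \<le> (\<Prod>q\<in>{q\<in>P. iota (t q) < m}. L q)" using assms by (intro prod_nonneg) auto
  moreover have "1 \<le> (\<Prod>q\<in>{q\<in>P. iota (t q) = m}. max 1 (L q) + b q)"
    using assms by (intro prod_ge_1) (auto simp: max_def)
  ultimately show ?thesis unfolding aterm_def by simp
qed

lemma comb:
  assumes "finite P" "\<forall>q\<in>P. 0 \<le> t q \<and> iota (t q) < K \<and> 0 \<le> L q \<and> 0 \<le> b q"
    "set xs \<subseteq> P" "distinct xs" "sorted (map t xs)"
    "\<forall>q\<in>P. \<forall>q'\<in>set xs. t q < t q' \<longrightarrow> q \<in> set xs"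
  shows "bnd L b xs \<le> (\<Sum>m<K. aterm t L b P m)"
  using assms
proof (induction xs arbitrary: P)
  case Nil
  then show ?case by (simp add: sum_nonneg aterm_nonneg)
next
  case (Cons q qs)
  define P' where "P' = P - {q}"
  have qP: "q \<in> P" using Cons.prems by simp
  have IH: "bnd L b qs \<le> (\<Sum>m<K. aterm t L b P' m)"
  proof (rule Cons.IH)
    show "finite P'" using Cons.prems unfolding P'_def by simp
    show "\<forall>q\<in>P'. 0 \<le> t q \<and> iota (t q) < K \<and> 0 \<le> L q \<and> 0 \<le> b q" using Cons.prems unfolding P'_def by simp
    show "set qs \<subseteq> P'" using Cons.prems unfolding P'_def by auto
    show "distinct qs" using Cons.prems by simp
    show "sorted (map t qs)" using Cons.prems by simp
    show "\<forall>q''\<in>P'. \<forall>q'\<in>set qs. t q'' < t q' \<longrightarrow> q'' \<in> set qs"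
      using Cons.prems(6) unfolding P'_def by auto
  qed
  have qmin: "t q \<le> t q''" if "q'' \<in> P" for q''
  proof (rule ccontr)
    assume "\<not> t q \<le> t q''"
    then have lt: "t q'' < t q" by simp
    then have "q'' \<in> set (q # qs)" using Cons.prems(6) that by auto
    moreover have "q'' \<noteq> q" using lt by auto
    ultimately have "q'' \<in> set qs" by simp
    then have "t q \<le> t q''" using Cons.prems(5) by simp
    then show False using lt by simp
  qed
  define m0 where "m0 = iota (t q)"
  have iq: "m0 \<le> iota (t q'')" if "q'' \<in> P" for q''
    unfolding m0_def iota_def using qmin[OF that] by (intro nat_mono floor_mono)
  have m0K: "m0 < K" using Cons.prems(2) qP unfolding m0_def by simp
  have L0: "0 \<le> L q" "0 \<le> b q" using Cons.prems(2) qP by auto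
  have fP': "finite P'" using Cons.prems unfolding P'_def by simp
  have nonneg': "\<forall>q\<in>P'. 0 \<le> L q \<and> 0 \<le> b q" using Cons.prems(2) unfolding P'_def by auto
  have termle: "L q * aterm t L b P' m + (if m = m0 then b q else 0) \<le> aterm t L b P m" for m
  proof (cases "m < m0")
    case True
    have e1: "{q''\<in>P. iota (t q'') = m} = {}" using iq True by fastforce
    have e2: "{q''\<in>P'. iota (t q'') = m} = {}" using e1 unfolding P'_def by auto
    show ?thesis using True by (simp add: aterm_def e1 e2)
  next
    case False
    have nlt: "\<not> m < m0" using False .
    show ?thesis
    proof (cases "m = m0")
      case True
      have e1: "{q''\<in>P. iota (t q'') < m} = {}" using iq True by fastforce
      have e2: "{q''\<in>P'. iota (t q'') < m} = {}" using e1 unfolding P'_def by auto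
      have e3: "{q''\<in>P. iota (t q'') = m} = insert q {q''\<in>P'. iota (t q'') = m}"
        using True qP unfolding P'_def m0_def by auto
      define Z where "Z = (\<Prod>q\<in>{q''\<in>P'. iota (t q'') = m}. max 1 (L q) + b q)"
      have Z1: "1 \<le> Z" unfolding Z_def using nonneg' by (intro prod_ge_1) (auto simp: max_def)
      have pe: "(\<Prod>q\<in>{q''\<in>P. iota (t q'') = m}. max 1 (L q) + b q) = (max 1 (L q) + b q) * Z"
        unfolding e3 Z_def using fP' by (subst prod.insert) (auto simp: P'_def)
      show ?thesis unfolding aterm_def e1 e2 pe Z_def[symmetric] using True arith1[OF L0 Z1] by simp
    next
      case False
      with nlt have gt: "m0 < m" by simp
      have e1: "{q''\<in>P. iota (t q'') < m} = insert q {q''\<in>P'. iota (t q'') < m}"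
        using gt qP unfolding P'_def m0_def by auto
      have e2: "{q''\<in>P. iota (t q'') = m} = {q''\<in>P'. iota (t q'') = m}"
        using gt unfolding P'_def m0_def by auto
      have "(\<Prod>q\<in>{q''\<in>P. iota (t q'') < m}. L q) = L q * (\<Prod>q\<in>{q''\<in>P'. iota (t q'') < m}. L q)"
        unfolding e1 using fP' by (subst prod.insert) (auto simp: P'_def)
      then show ?thesis using False by (simp add: aterm_def e2)
    qed
  qed
  have "bnd L b (q # qs) = b q + L q * bnd L b qs" by simp
  also have "\<dots> \<le> b q + L q * (\<Sum>m<K. aterm t L b P' m)"
    using IH L0 by (simp add: mult_left_mono)
  also have "\<dots> = (\<Sum>m<K. L q * aterm t L b P' m + (if m = m0 then b q else 0))"
    using m0K by (simp add: sum.distrib sum_distrib_left)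
  also have "\<dots> \<le> (\<Sum>m<K. aterm t L b P m)"
    by (rule sum_mono) (rule termle)
  finally show ?case .
qed

lemma ik: "linorder.insort_key (\<le>) f x xs = insort_key (f :: 'b \<Rightarrow> real) x xs"
  by (induction xs) (simp_all add: linorder.insort_key.simps[OF linorder_class.linorder_axioms])

lemma skl: "linorder.sorted_key_list_of_set (\<le>) f A = sorted_key_list_of_set (f::'b \<Rightarrow> real) A"
proof -
  have "linorder.insort_key (\<le>) f = insort_key f" by (intro ext ik)
  then show ?thesis
  unfolding sorted_key_list_of_set_def linorder.sorted_key_list_of_set_def[OF linorder_class.linorder_axioms] by simp
qed

context sett begin

definition Lq :: "real \<times> 'x \<times> (real \<Rightarrow> real) \<Rightarrow> real" where "Lq q = lip_const (snd (snd q))"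
definition bq :: "real \<Rightarrow> real \<times> 'x \<times> (real \<Rightarrow> real) \<Rightarrow> real" where "bq z q = \<bar>snd (snd q) z - z\<bar>"

definition am :: "real \<Rightarrow> 'w \<Rightarrow> nat \<Rightarrow> real" where
  "am z w m = (\<Prod>q\<in>Pts w \<inter> R 0 (real m). Lq q) * ((\<Prod>q\<in>Pts w \<inter> R (real m) (real (Suc m)). max 1 (Lq q) + bq z q) - 1)"

definition good :: "'w \<Rightarrow> bool" where
  "good w \<longleftrightarrow> (\<forall>m::nat. finite (Pts w \<inter> R 0 m) \<and> inj_on fst (Pts w \<inter> R 0 m))"

lemma iota_lt: "0 \<le> x \<Longrightarrow> iota x < m \<longleftrightarrow> x < real m"
  unfolding iota_def by (simp add: nat_less_iff floor_less_iff)

lemma iota_eq: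
  assumes x: "0 \<le> x" shows "iota x = m \<longleftrightarrow> real m \<le> x \<and> x < real (Suc m)"
proof -
  have "0 \<le> \<lfloor>x\<rfloor>" using x by simp
  then have "iota x = m \<longleftrightarrow> \<lfloor>x\<rfloor> = int m" unfolding iota_def by auto
  also have "\<dots> \<longleftrightarrow> real m \<le> x \<and> x < real m + 1" by (simp add: floor_eq_iff)
  finally show ?thesis by (simp add: add.commute)
qed

lemma iota_le: "0 \<le> x \<Longrightarrow> real (iota x) \<le> x"
  using iota_eq by blast

lemma iota_gt: "0 \<le> x \<Longrightarrow> x < 1 + real (iota x)"
  using iota_eq by fastforce

lemma Pts_in: "w \<in> space M \<Longrightarrow> q \<in> Pts w \<Longrightarrow> 0 \<le> fst q \<and> snd (snd q) \<in> G_space"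
  using Pts_space[of w] space_Lam by (cases q) auto

lemma aterm_am:
  assumes w: "w \<in> space M" and mK: "m < K"
  shows "aterm fst Lq (bq z) (Pts w \<inter> R 0 (real K)) m = am z w m"
proof -
  have e1: "{q \<in> Pts w \<inter> R 0 (real K). iota (fst q) < m} = Pts w \<inter> R 0 (real m)"
    using mK Pts_in[OF w] by (auto simp: R_def iota_lt)
  have e2: "{q \<in> Pts w \<inter> R 0 (real K). iota (fst q) = m} = Pts w \<inter> R (real m) (real (Suc m))"
    using mK Pts_in[OF w] by (auto simp: R_def iota_eq iota_le iota_gt)
  show ?thesis unfolding aterm_def am_def e1 e2 ..
qed

lemma pointwise:
  assumes w: "w \<in> space M" and g: "good w"
  shows "\<bar>zeta_t (Pts w) A z s - z\<bar> \<le> (\<Sum>m<nat \<lfloor>max s 0\<rfloor> + 1. am z w m)"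
proof -
  define K where "K = nat \<lfloor>max s 0\<rfloor> + 1"
  have sK: "s < real K" unfolding K_def by linarith
  define W where "W = {q \<in> Pts w. fst q \<le> s \<and> fst (snd q) \<in> A}"
  define P where "P = Pts w \<inter> R 0 (real K)"
  have WP: "W \<subseteq> P" unfolding W_def P_def R_def using Pts_in[OF w] Pts_space[OF w] sK by auto
  have finP: "finite P" using g unfolding good_def P_def by blast
  have injP: "inj_on fst P" using g unfolding good_def P_def by blast
  have finW: "finite W" using finite_subset[OF WP finP] .
  have injW: "inj_on fst W" using inj_on_subset[OF injP WP] .
  interpret FK: folding_insort_key "(\<le>) :: real \<Rightarrow> real \<Rightarrow> bool" "(<)" W fst
    by unfold_locales (rule injW)
  define xs where "xs = sorted_key_list_of_set fst W"
  have xs1: "set xs = W" unfolding xs_def using FK.set_sorted_key_list_of_set[OF order_refl finW] by (simp add: skl)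
  have xs2: "sorted (map fst xs)" unfolding xs_def using FK.sorted_sorted_key_list_of_set[OF order_refl] by (simp add: skl)
  have xs3: "distinct xs" unfolding xs_def using FK.distinct_sorted_key_list_of_set[OF order_refl]
    by (simp add: distinct_map skl)
  have zt: "zeta_t (Pts w) A z s = foldr (\<lambda>q g. snd (snd q) \<circ> g) xs id z"
    unfolding zeta_t_def points_upto_def xs_def W_def ..
  have "\<bar>zeta_t (Pts w) A z s - z\<bar> \<le> bnd (\<lambda>q. lip_const (snd (snd q))) (\<lambda>q. \<bar>snd (snd q) z - z\<bar>) xs"
    unfolding zt by (rule comp_bound) (use xs1 WP Pts_in[OF w] in \<open>auto simp: W_def\<close>)
  also have "\<dots> = bnd Lq (bq z) xs" unfolding Lq_def[abs_def] bq_def[abs_def] ..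
  also have "\<dots> \<le> (\<Sum>m<K. aterm fst Lq (bq z) P m)"
  proof (rule comb[OF finP])
    show "\<forall>q\<in>P. 0 \<le> fst q \<and> iota (fst q) < K \<and> 0 \<le> Lq q \<and> 0 \<le> bq z q"
      using Pts_in[OF w] by (auto simp: P_def R_def iota_lt Lq_def bq_def lip_nonneg)
    show "set xs \<subseteq> P" using xs1 WP by simp
    show "distinct xs" by (rule xs3)
    show "sorted (map fst xs)" by (rule xs2)
    show "\<forall>q\<in>P. \<forall>q'\<in>set xs. fst q < fst q' \<longrightarrow> q \<in> set xs"
      unfolding xs1 by (auto simp: P_def W_def R_def)
  qed
  also have "\<dots> = (\<Sum>m<K. am z w m)"
    by (intro sum.cong refl) (simp add: P_def aterm_am[OF w])
  finally show ?thesis unfolding K_def .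
qed

end

lemma powr_add_le:
  fixes a b p :: real
  assumes "0 \<le> a" "0 \<le> b" "0 < p"
  shows "(a + b) powr p \<le> 2 powr p * (a powr p + b powr p)"
proof -
  have "(a + b) powr p \<le> (2 * max a b) powr p"
    using assms by (intro powr_mono2) auto
  also have "\<dots> = 2 powr p * max a b powr p" using assms by (simp add: powr_mult)
  also have "max a b powr p \<le> a powr p + b powr p" by (simp add: max_def)
  finally show ?thesis by simp
qed

lemma theta_bound:
  fixes v D p \<kappa> :: real and x y :: "nat \<Rightarrow> real"
  assumes p: "0 < p" and k: "0 < \<kappa>" "\<kappa> < 1" and D: "0 \<le> D" and v: "0 \<le> v"
    and x0: "\<And>m. 0 \<le> x m" and xy: "\<And>m. x m powr p \<le> y m"
    and vb: "ennreal v \<le> ennreal D + (\<Sum>m. ennreal (x m))"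
  shows "ennreal (v powr p) \<le> ennreal (2 powr p * D powr p)
           + ennreal (2 powr p / (1 - \<kappa> powr (1/p)) powr p) * (\<Sum>m. ennreal ((1/\<kappa>)^m * y m))"
proof -
  define \<theta> where "\<theta> = \<kappa> powr (1/p)"
  have th0: "0 < \<theta>" unfolding \<theta>_def using k by simp
  have th1: "\<theta> < 1" unfolding \<theta>_def using powr_less_mono2[of "1/p" \<kappa> 1] k p by simp
  define c2 where "c2 = 2 powr p / (1 - \<theta>) powr p"
  have c2: "0 < c2" unfolding c2_def using th1 by simp
  define T where "T = (\<Sum>m. ennreal ((1/\<kappa>)^m * y m))"
  have y0: "0 \<le> y m" for m using xy[of m] by (meson order_trans powr_ge_zero)
  show ?thesis
  proof (cases "T = top")
    case True
    then have "ennreal c2 * T = top" using c2 by (simp add: ennreal_mult_top)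
    then show ?thesis unfolding T_def c2_def \<theta>_def by simp
  next
    case False
    then obtain t where t: "0 \<le> t" "T = ennreal t" by (cases T) auto
    have ym: "y m \<le> \<kappa>^m * t" for m
    proof -
      have "ennreal ((1/\<kappa>)^m * y m) \<le> T" unfolding T_def
        using sum_le_suminf[of "\<lambda>m. ennreal ((1/\<kappa>)^m * y m)" "{m}"] by simp
      then have "(1/\<kappa>)^m * y m \<le> t" using t by (simp add: ennreal_le_iff)
      then have "\<kappa>^m * ((1/\<kappa>)^m * y m) \<le> \<kappa>^m * t" using k by (intro mult_left_mono) auto
      moreover have "\<kappa>^m * ((1/\<kappa>)^m * y m) = y m" using k by (simp add: power_one_over field_simps)
      ultimately show ?thesis by linarith
    qed
    define u0 where "u0 = t powr (1/p)"
    have u00: "0 \<le> u0" unfolding u0_def by simp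
    have xm: "x m \<le> u0 * \<theta>^m" for m
    proof -
      have "x m = (x m powr p) powr (1/p)" using x0[of m] p by (simp add: powr_powr powr_one)
      also have "\<dots> \<le> (\<kappa>^m * t) powr (1/p)" using ym[of m] xy[of m] p x0[of m]
        by (intro powr_mono2) (auto intro: order_trans)
      also have "\<dots> = u0 * (\<kappa>^m) powr (1/p)" unfolding u0_def using t k by (simp add: powr_mult mult.commute)
      also have "(\<kappa>^m) powr (1/p) = \<theta>^m" unfolding \<theta>_def using k
        by (simp add: powr_realpow[symmetric] powr_powr powr_power mult.commute)
      finally show ?thesis .
    qed
    have geo: "(\<lambda>m. u0 * \<theta>^m) sums (u0 * (1 / (1 - \<theta>)))"
      by (rule sums_mult[OF geometric_sums]) (use th0 th1 in simp)
    have "(\<Sum>m. ennreal (x m)) \<le> (\<Sum>m. ennreal (u0 * \<theta>^m))"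
      by (intro suminf_le) (auto simp: xm ennreal_leI)
    also have "\<dots> = ennreal (\<Sum>m. u0 * \<theta>^m)"
      using geo u00 th0 th1 by (intro suminf_ennreal2) (simp_all add: sums_summable)
    also have "(\<Sum>m. u0 * \<theta>^m) = u0 / (1 - \<theta>)" using sums_unique[OF geo] by simp
    finally have "ennreal v \<le> ennreal D + ennreal (u0 / (1 - \<theta>))" using vb by (meson add_left_mono order_trans)
    then have vle: "v \<le> D + u0 / (1 - \<theta>)" using D u00 th1
      by (simp add: ennreal_plus[symmetric] ennreal_le_iff del: ennreal_plus)
    have "v powr p \<le> (D + u0 / (1 - \<theta>)) powr p" using vle v p by (intro powr_mono2) auto
    also have "\<dots> \<le> 2 powr p * (D powr p + (u0 / (1 - \<theta>)) powr p)"
      using D u00 th1 p by (intro powr_add_le) auto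
    also have "(u0 / (1 - \<theta>)) powr p = t / (1 - \<theta>) powr p"
      unfolding u0_def using t th1 p by (simp add: powr_divide powr_powr powr_one)
    finally have "v powr p \<le> 2 powr p * D powr p + c2 * t" unfolding c2_def by (simp add: algebra_simps)
    then have "ennreal (v powr p) \<le> ennreal (2 powr p * D powr p + c2 * t)" by (rule ennreal_leI)
    also have "\<dots> = ennreal (2 powr p * D powr p) + ennreal c2 * T"
      using t c2 D by (simp add: ennreal_plus ennreal_mult)
    finally show ?thesis unfolding T_def c2_def \<theta>_def .
  qed
qed

context sett begin

definition c0 :: real where "c0 = (THE l::real. False)"

lemma am_nonneg: "w \<in> space M \<Longrightarrow> 0 \<le> am z w m"
proof -
  assume w: "w \<in> space M"
  have "0 \<le> aterm fst Lq (bq z) (Pts w \<inter> R 0 (real (Suc m))) m"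
    by (rule aterm_nonneg) (use Pts_in[OF w] in \<open>auto simp: Lq_def bq_def lip_nonneg\<close>)
  then show ?thesis using aterm_am[OF w, of m "Suc m" z] by simp
qed

lemma zeta_bound:
  assumes w: "w \<in> space M" and g: "good w"
  shows "ennreal \<bar>zeta (Pts w) A z\<bar> \<le> ennreal (\<bar>z\<bar> + \<bar>c0\<bar>) + (\<Sum>m. ennreal (am z w m))"
proof -
  define f where "f s = zeta_t (Pts w) A z s" for s
  define S where "S = (\<Sum>m. ennreal (am z w m))"
  have bs: "ennreal \<bar>f s\<bar> \<le> ennreal \<bar>z\<bar> + S" for s
  proof -
    define K where "K = nat \<lfloor>max s 0\<rfloor> + 1"
    have a1: "\<bar>f s\<bar> \<le> \<bar>z\<bar> + \<bar>f s - z\<bar>" by linarith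
    have a2: "\<bar>f s - z\<bar> \<le> (\<Sum>m<K. am z w m)" unfolding f_def K_def by (rule pointwise[OF w g])
    have "\<bar>f s\<bar> \<le> \<bar>z\<bar> + (\<Sum>m<K. am z w m)" using a1 a2 by linarith
    then have "ennreal \<bar>f s\<bar> \<le> ennreal (\<bar>z\<bar> + (\<Sum>m<K. am z w m))" by (rule ennreal_leI)
    also have "\<dots> = ennreal \<bar>z\<bar> + (\<Sum>m<K. ennreal (am z w m))"
      using am_nonneg[OF w] by (simp add: ennreal_plus sum_nonneg)
    also have "(\<Sum>m<K. ennreal (am z w m)) \<le> S" unfolding S_def
      by (rule sum_le_suminf) auto
    finally show ?thesis by (simp add: add_left_mono)
  qed
  show ?thesis
  proof (cases "\<exists>l. (f \<longlongrightarrow> l) at_top")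
    case True
    then obtain l where l: "(f \<longlongrightarrow> l) at_top" by blast
    have zl: "zeta (Pts w) A z = l" unfolding zeta_def f_def[symmetric]
      by (rule tendsto_Lim[OF trivial_limit_at_top_linorder l])
    have "((\<lambda>s. ennreal \<bar>f s\<bar>) \<longlongrightarrow> ennreal \<bar>l\<bar>) at_top"
      by (intro tendsto_ennrealI tendsto_rabs l)
    then have "ennreal \<bar>l\<bar> \<le> ennreal \<bar>z\<bar> + S"
      by (rule tendsto_upperbound) (use bs trivial_limit_at_top_linorder in auto)
    also have "\<dots> \<le> ennreal (\<bar>z\<bar> + \<bar>c0\<bar>) + S"
      by (intro add_right_mono ennreal_leI) simp
    finally show ?thesis unfolding zl S_def .
  next
    case False
    have "(\<lambda>l. (f \<longlongrightarrow> l) at_top) = (\<lambda>l. False)" using False by auto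
    then have "zeta (Pts w) A z = c0" unfolding zeta_def c0_def f_def[symmetric] by (subst Topological_Spaces.Lim_def) simp
    then show ?thesis by (simp add: ennreal_leI add_increasing2)
  qed
qed

definition hm :: "real \<Rightarrow> real \<Rightarrow> nat \<Rightarrow> real \<times> 'x \<times> (real \<Rightarrow> real) \<Rightarrow> real" where
  "hm z p m q = (if fst q < real m then Lq q else max 1 (Lq q) + bq z q) powr p"

lemma am_PF:
  assumes w: "w \<in> space M" and g: "good w" and p: "0 < p"
  shows "am z w m powr p \<le> PF (hm z p m) (R 0 (real (Suc m))) w"
proof -
  define P1 where "P1 = Pts w \<inter> R 0 (real m)"
  define P2 where "P2 = Pts w \<inter> R (real m) (real (Suc m))"
  have fin: "finite (Pts w \<inter> R 0 (real (Suc m)))" using g unfolding good_def by blast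
  have U: "Pts w \<inter> R 0 (real (Suc m)) = P1 \<union> P2" unfolding P1_def P2_def R_def by auto
  have fin1: "finite P1" "finite P2" using fin U by auto
  have disj: "P1 \<inter> P2 = {}" unfolding P1_def P2_def R_def by auto
  define La where "La = (\<Prod>q\<in>P1. Lq q)"
  define Z where "Z = (\<Prod>q\<in>P2. max 1 (Lq q) + bq z q)"
  have La0: "0 \<le> La" unfolding La_def P1_def using Pts_in[OF w]
    by (intro prod_nonneg) (auto simp: Lq_def lip_nonneg)
  have Z1: "1 \<le> Z" unfolding Z_def P2_def
    by (intro prod_ge_1) (auto simp: bq_def max_def)
  have "PF (hm z p m) (R 0 (real (Suc m))) w = (\<Prod>q\<in>P1 \<union> P2. hm z p m q)"
    unfolding PF_def using fin U by simp
  also have "\<dots> = (\<Prod>q\<in>P1. hm z p m q) * (\<Prod>q\<in>P2. hm z p m q)"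
    by (rule prod.union_disjoint[OF fin1 disj])
  also have "(\<Prod>q\<in>P1. hm z p m q) = (\<Prod>q\<in>P1. Lq q powr p)"
    by (intro prod.cong refl) (auto simp: hm_def P1_def R_def)
  also have "(\<Prod>q\<in>P2. hm z p m q) = (\<Prod>q\<in>P2. (max 1 (Lq q) + bq z q) powr p)"
    by (intro prod.cong refl) (auto simp: hm_def P2_def R_def)
  also have "(\<Prod>q\<in>P1. Lq q powr p) = La powr p" unfolding La_def by (rule prod_powr_distrib[symmetric])
  also have "(\<Prod>q\<in>P2. (max 1 (Lq q) + bq z q) powr p) = Z powr p" unfolding Z_def by (rule prod_powr_distrib[symmetric])
  finally have PFe: "PF (hm z p m) (R 0 (real (Suc m))) w = (La * Z) powr p"
    using La0 Z1 by (simp add: powr_mult)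
  have "am z w m = La * (Z - 1)" unfolding am_def La_def Z_def P1_def P2_def ..
  then have "am z w m \<le> La * Z" using La0 by (simp add: mult_left_mono)
  then have "am z w m powr p \<le> (La * Z) powr p" using am_nonneg[OF w] p by (intro powr_mono2) auto
  then show ?thesis unfolding PFe .
qed

end

context sett begin

lemma hm_meas[measurable]: "hm z p m \<in> borel_measurable Lam"
  unfolding hm_def[abs_def] Lq_def bq_def by measurable

lemma hm_integral:
  "(\<integral>\<^sup>+q. ennreal (hm z p m q) * indicator (R 0 (real (Suc m))) q \<partial>Lam)
    = ennreal (real m) * emeasure \<mu> A * (\<integral>\<^sup>+f. ennreal (lip_const f powr p) \<partial>\<nu>)
      + ennreal 1 * emeasure \<mu> A * (\<integral>\<^sup>+f. ennreal ((max 1 (lip_const f) + \<bar>f z - z\<bar>) powr p) \<partial>\<nu>)"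
proof -
  define \<phi>1 where "\<phi>1 f = ennreal (lip_const f powr p)" for f :: "real \<Rightarrow> real"
  define \<phi>2 where "\<phi>2 f = ennreal ((max 1 (lip_const f) + \<bar>f z - z\<bar>) powr p)" for f :: "real \<Rightarrow> real"
  have m1[measurable]: "\<phi>1 \<in> borel_measurable \<nu>" unfolding \<phi>1_def by measurable
  have m2[measurable]: "\<phi>2 \<in> borel_measurable \<nu>" unfolding \<phi>2_def by measurable
  have pw: "ennreal (hm z p m q) * indicator (R 0 (real (Suc m))) q
      = \<phi>1 (snd (snd q)) * indicator (R 0 (real m)) q + \<phi>2 (snd (snd q)) * indicator (R (real m) (real (Suc m))) q" for q
    by (cases "q \<in> R 0 (real m)"; cases "q \<in> R (real m) (real (Suc m))")
       (auto simp: R_def hm_def Lq_def bq_def \<phi>1_def \<phi>2_def indicator_def)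
  have "(\<integral>\<^sup>+q. ennreal (hm z p m q) * indicator (R 0 (real (Suc m))) q \<partial>Lam)
      = (\<integral>\<^sup>+q. \<phi>1 (snd (snd q)) * indicator (R 0 (real m)) q + \<phi>2 (snd (snd q)) * indicator (R (real m) (real (Suc m))) q \<partial>Lam)"
    by (simp only: pw)
  also have "\<dots> = (\<integral>\<^sup>+q. \<phi>1 (snd (snd q)) * indicator (R 0 (real m)) q \<partial>Lam)
      + (\<integral>\<^sup>+q. \<phi>2 (snd (snd q)) * indicator (R (real m) (real (Suc m))) q \<partial>Lam)"
    by (rule nn_integral_add) measurable
  also have "(\<integral>\<^sup>+q. \<phi>1 (snd (snd q)) * indicator (R 0 (real m)) q \<partial>Lam)
      = ennreal (real m - 0) * emeasure \<mu> A * (\<integral>\<^sup>+f. \<phi>1 f \<partial>\<nu>)"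
    by (rule region_integral) auto
  also have "(\<integral>\<^sup>+q. \<phi>2 (snd (snd q)) * indicator (R (real m) (real (Suc m))) q \<partial>Lam)
      = ennreal (real (Suc m) - real m) * emeasure \<mu> A * (\<integral>\<^sup>+f. \<phi>2 f \<partial>\<nu>)"
    by (rule region_integral) auto
  finally show ?thesis unfolding \<phi>1_def \<phi>2_def by simp
qed

lemma PF_exp:
  assumes p: "0 < p"
    and I1: "(\<integral>\<^sup>+f. ennreal (lip_const f powr p) \<partial>\<nu>) = ennreal c" and c0: "0 \<le> c"
    and I2: "(\<integral>\<^sup>+f. ennreal ((max 1 (lip_const f) + \<bar>f z - z\<bar>) powr p) \<partial>\<nu>) = ennreal k2" and k0: "0 \<le> k2"
  shows "PF (hm z p m) (R 0 (real (Suc m))) \<in> borel_measurable M \<and>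
    (\<integral>\<^sup>+w. ennreal (PF (hm z p m) (R 0 (real (Suc m))) w) \<partial>M)
      \<le> ennreal (exp (real m * lam * c + lam * k2 - (real m + 1) * lam))"
proof -
  have Hh: "(\<integral>\<^sup>+q. ennreal (hm z p m q) * indicator (R 0 (real (Suc m))) q \<partial>Lam) \<le> ennreal (real m * lam * c + lam * k2)"
    unfolding hm_integral I1 I2 emu_A using lam0 c0 k0
    by (simp add: ennreal_mult[symmetric] ennreal_plus[symmetric] del: ennreal_plus)
  have "PF (hm z p m) (R 0 (real (Suc m))) \<in> borel_measurable M \<and>
    (\<integral>\<^sup>+w. ennreal (PF (hm z p m) (R 0 (real (Suc m))) w) \<partial>M)
      \<le> ennreal (exp (real m * lam * c + lam * k2 - measure Lam (R 0 (real (Suc m)))))"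
    by (rule core[OF R_sets R_fin hm_meas _ _ Hh]) (use lam0 c0 k0 in \<open>auto simp: hm_def\<close>)
  moreover have "measure Lam (R 0 (real (Suc m))) = (real m + 1) * lam"
    by (subst R_measure) auto
  ultimately show ?thesis by simp
qed

end

context sett begin

lemma final:
  assumes p: "0 < p" and Apos: "0 < emeasure \<mu> A"
    and ELp: "(\<integral>\<^sup>+f. ennreal (lip_const f powr p) \<partial>\<nu>) < 1"
    and Ezp: "(\<integral>\<^sup>+f. ennreal (\<bar>f z - z\<bar> powr p) \<partial>\<nu>) < \<infinity>"
  shows "(\<integral>\<^sup>+w. ennreal (\<bar>zeta (Pts w) A z\<bar> powr p) \<partial>M) < \<infinity>"
proof -
  interpret N: prob_space \<nu> by (rule nu_prob)
  have lpos: "0 < lam" using Apos emu_A by simp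
  obtain c where c: "(\<integral>\<^sup>+f. ennreal (lip_const f powr p) \<partial>\<nu>) = ennreal c" "0 \<le> c" "c < 1"
  proof -
    have "(\<integral>\<^sup>+f. ennreal (lip_const f powr p) \<partial>\<nu>) < top" using ELp by (simp add: order_less_trans)
    then obtain c where "(\<integral>\<^sup>+f. ennreal (lip_const f powr p) \<partial>\<nu>) = ennreal c" "0 \<le> c"
      by (cases "\<integral>\<^sup>+f. ennreal (lip_const f powr p) \<partial>\<nu>") auto
    moreover from this ELp have "c < 1" by (simp add: ennreal_less_iff ennreal_1[symmetric] del: ennreal_1)
    ultimately show ?thesis using that by blast
  qed
  define I2 where "I2 = (\<integral>\<^sup>+f. ennreal ((max 1 (lip_const f) + \<bar>f z - z\<bar>) powr p) \<partial>\<nu>)"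
  have I2fin: "I2 < top"
  proof -
    have pt: "ennreal ((max 1 (lip_const f) + \<bar>f z - z\<bar>) powr p)
        \<le> ennreal (2 powr p) * (1 + ennreal (lip_const f powr p) + ennreal (\<bar>f z - z\<bar> powr p))" for f
    proof -
      have "(max 1 (lip_const f) + \<bar>f z - z\<bar>) powr p \<le> 2 powr p * (max 1 (lip_const f) powr p + \<bar>f z - z\<bar> powr p)"
        by (rule powr_add_le) (use p in auto)
      also have "max 1 (lip_const f) powr p \<le> 1 + lip_const f powr p" by (simp add: max_def)
      finally have "(max 1 (lip_const f) + \<bar>f z - z\<bar>) powr p \<le> 2 powr p * (1 + lip_const f powr p + \<bar>f z - z\<bar> powr p)"
        by (simp add: algebra_simps)
      then have "ennreal ((max 1 (lip_const f) + \<bar>f z - z\<bar>) powr p) \<le> ennreal (2 powr p * (1 + lip_const f powr p + \<bar>f z - z\<bar> powr p))"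
        by (rule ennreal_leI)
      also have "\<dots> = ennreal (2 powr p) * (1 + ennreal (lip_const f powr p) + ennreal (\<bar>f z - z\<bar> powr p))"
        by (simp add: ennreal_mult ennreal_plus)
      finally show ?thesis .
    qed
    have "I2 \<le> (\<integral>\<^sup>+f. ennreal (2 powr p) * (1 + ennreal (lip_const f powr p) + ennreal (\<bar>f z - z\<bar> powr p)) \<partial>\<nu>)"
      unfolding I2_def by (rule nn_integral_mono) (rule pt)
    also have "\<dots> = ennreal (2 powr p) * (1 + (\<integral>\<^sup>+f. ennreal (lip_const f powr p) \<partial>\<nu>) + (\<integral>\<^sup>+f. ennreal (\<bar>f z - z\<bar> powr p) \<partial>\<nu>))"
      by (simp add: nn_integral_cmult nn_integral_add N.emeasure_space_1)
    also have "\<dots> < top" using c Ezp by (simp add: ennreal_mult_less_top)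
    finally show ?thesis .
  qed
  then obtain k2 where k2: "I2 = ennreal k2" "0 \<le> k2" by (cases I2) auto
  define \<rho> where "\<rho> = exp (- (lam * (1 - c)))"
  have rho: "0 < \<rho>" "\<rho> < 1" unfolding \<rho>_def using lpos c by auto
  define \<kappa> where "\<kappa> = (1 + \<rho>) / 2"
  have kap: "0 < \<kappa>" "\<kappa> < 1" "\<rho> < \<kappa>" unfolding \<kappa>_def using rho by auto
  define C3 where "C3 = exp (lam * (k2 - 1))"
  define PFm where "PFm m = PF (hm z p m) (R 0 (real (Suc m)))" for m
  have PFm: "PFm m \<in> borel_measurable M \<and> (\<integral>\<^sup>+w. ennreal (PFm m w) \<partial>M) \<le> ennreal (C3 * \<rho>^m)" for m
  proof -
    have e: "exp (real m * lam * c + lam * k2 - (real m + 1) * lam) = C3 * \<rho>^m"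
    proof -
      have "real m * lam * c + lam * k2 - (real m + 1) * lam = lam * (k2 - 1) + real m * (- (lam * (1 - c)))"
        by (simp add: algebra_simps)
      then show ?thesis unfolding C3_def \<rho>_def by (simp only: exp_add exp_of_nat_mult)
    qed
    show ?thesis using PF_exp[OF p c(1) c(2) k2(1)[unfolded I2_def] k2(2), of m] unfolding PFm_def e by simp
  qed
  have PFm_meas[measurable]: "PFm m \<in> borel_measurable M" for m using PFm by blast
  have PFm0: "0 \<le> PFm m w" for m w
    unfolding PFm_def PF_def hm_def by (auto intro: prod_nonneg)
  define D where "D = \<bar>z\<bar> + \<bar>c0\<bar>"
  define c1 where "c1 = 2 powr p * D powr p"
  define c2 where "c2 = 2 powr p / (1 - \<kappa> powr (1/p)) powr p"
  define T where "T w = (\<Sum>m. ennreal ((1/\<kappa>)^m * PFm m w))" for w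
  have T_meas: "T \<in> borel_measurable M" unfolding T_def by measurable
  have AEb: "AE w in M. ennreal (\<bar>zeta (Pts w) A z\<bar> powr p) \<le> ennreal c1 + ennreal c2 * T w"
    using AE_good
  proof (rule AE_mp, intro AE_I2 impI)
    fix w assume w: "w \<in> space M" and g0: "\<forall>m::nat. finite (Pts w \<inter> R 0 (real m)) \<and> inj_on fst (Pts w \<inter> R 0 (real m))"
    have g: "good w" unfolding good_def using g0 by blast
    show "ennreal (\<bar>zeta (Pts w) A z\<bar> powr p) \<le> ennreal c1 + ennreal c2 * T w"
      unfolding c1_def c2_def T_def
    proof (rule theta_bound[OF p kap(1,2)])
      show "0 \<le> D" unfolding D_def by simp
      show "0 \<le> \<bar>zeta (Pts w) A z\<bar>" by simp
      show "0 \<le> am z w m" for m by (rule am_nonneg[OF w])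
      show "am z w m powr p \<le> PFm m w" for m unfolding PFm_def by (rule am_PF[OF w g p])
      show "ennreal \<bar>zeta (Pts w) A z\<bar> \<le> ennreal D + (\<Sum>m. ennreal (am z w m))"
        unfolding D_def by (rule zeta_bound[OF w g])
    qed
  qed
  have "(\<integral>\<^sup>+w. ennreal (\<bar>zeta (Pts w) A z\<bar> powr p) \<partial>M) \<le> (\<integral>\<^sup>+w. ennreal c1 + ennreal c2 * T w \<partial>M)"
    by (rule nn_integral_mono_AE[OF AEb])
  also have "\<dots> = ennreal c1 + ennreal c2 * (\<integral>\<^sup>+w. T w \<partial>M)"
    using T_meas by (simp add: nn_integral_add nn_integral_cmult emeasure_space_1)
  also have "(\<integral>\<^sup>+w. T w \<partial>M) = (\<Sum>m. \<integral>\<^sup>+w. ennreal ((1/\<kappa>)^m * PFm m w) \<partial>M)"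
    unfolding T_def by (rule nn_integral_suminf) measurable
  also have "\<dots> \<le> (\<Sum>m. ennreal (C3 * (\<rho>/\<kappa>)^m))"
  proof (rule suminf_le)
    fix m
    have "(\<integral>\<^sup>+w. ennreal ((1/\<kappa>)^m * PFm m w) \<partial>M) = ennreal ((1/\<kappa>)^m) * (\<integral>\<^sup>+w. ennreal (PFm m w) \<partial>M)"
      using kap by (simp add: ennreal_mult' nn_integral_cmult)
    also have "\<dots> \<le> ennreal ((1/\<kappa>)^m) * ennreal (C3 * \<rho>^m)"
      using PFm[of m] by (intro mult_left_mono) auto
    also have "\<dots> = ennreal (C3 * (\<rho>/\<kappa>)^m)"
      using kap rho by (simp add: ennreal_mult[symmetric] C3_def power_divide field_simps)
    finally show "(\<integral>\<^sup>+w. ennreal ((1/\<kappa>)^m * PFm m w) \<partial>M) \<le> ennreal (C3 * (\<rho>/\<kappa>)^m)" .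
  qed auto
  also have "(\<Sum>m. ennreal (C3 * (\<rho>/\<kappa>)^m)) = ennreal (\<Sum>m. C3 * (\<rho>/\<kappa>)^m)"
  proof (rule suminf_ennreal2)
    show "0 \<le> C3 * (\<rho>/\<kappa>)^m" for m using kap rho by (simp add: C3_def)
    show "summable (\<lambda>m. C3 * (\<rho>/\<kappa>)^m)"
      using kap rho by (intro summable_mult summable_geometric) simp
  qed
  finally have "(\<integral>\<^sup>+w. ennreal (\<bar>zeta (Pts w) A z\<bar> powr p) \<partial>M) \<le> ennreal c1 + ennreal c2 * ennreal (\<Sum>m. C3 * (\<rho>/\<kappa>)^m)"
    by (simp add: mult_left_mono add_left_mono)
  also have "\<dots> < \<infinity>" by (simp add: ennreal_mult_less_top)
  finally show ?thesis .
qed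

end

theorem proposition3p3:
  fixes M :: "'w measure"
    and \<mu> :: "'x::polish_space measure"
    and \<nu> :: "(real \<Rightarrow> real) measure"
    and Pts :: "'w \<Rightarrow> (real \<times> 'x \<times> (real \<Rightarrow> real)) set"
    and z0 p :: real
    and A :: "'x set"
  assumes \<nu>_prob: "prob_space \<nu>"
    and \<nu>_space: "space \<nu> = G_space"
    and \<nu>_sets: "sets \<nu> = sets G_borel"
    and EL: "(\<integral>\<^sup>+ f. ennreal (lip_const f) \<partial>\<nu>) < \<infinity>"
    and Elog: "(\<integral>\<^sup>+ f. ennreal (max 0 (ln (lip_const f))) \<partial>\<nu>)
               < (\<integral>\<^sup>+ f. (if lip_const f = 0 then \<infinity> else ennreal (max 0 (- ln (lip_const f)))) \<partial>\<nu>)"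
    and Ez0: "(\<integral>\<^sup>+ f. ennreal \<bar>f z0 - z0\<bar> \<partial>\<nu>) < \<infinity>"
    and \<mu>_sf: "sigma_finite_measure \<mu>"
    and \<mu>_sets: "sets \<mu> = sets borel"
    and PPP: "poisson_process M (restrict_space lborel {0..} \<Otimes>\<^sub>M (\<mu> \<Otimes>\<^sub>M \<nu>)) Pts"
    and p_pos: "p > 0"
    and ELp: "(\<integral>\<^sup>+ f. ennreal (lip_const f powr p) \<partial>\<nu>) < 1"
    and Ez0p: "(\<integral>\<^sup>+ f. ennreal (\<bar>f z0 - z0\<bar> powr p) \<partial>\<nu>) < \<infinity>"
    and A_sets: "A \<in> sets borel"
    and A_pos: "0 < emeasure \<mu> A"
    and A_fin: "emeasure \<mu> A < \<infinity>"
  shows "(\<integral>\<^sup>+ w. ennreal (\<bar>zeta (Pts w) A z0\<bar> powr p) \<partial>M) < \<infinity>"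
proof -
  interpret S: sett M \<mu> \<nu> Pts A
    apply unfold_locales
    apply (rule PPP)
    using sigma_finite_measure.sigma_finite_countable[OF prob_space_imp_sigma_finite[OF \<nu>_prob]] apply blast
    using prob_space.emeasure_space_1[OF \<nu>_prob] apply simp
    using prob_space.emeasure_space_1[OF \<nu>_prob] apply simp
    apply (rule \<nu>_space)
    apply (rule \<nu>_sets)
    using sigma_finite_measure.sigma_finite_countable[OF \<mu>_sf] apply blast
    using A_sets apply (simp add: \<mu>_sets)
    apply (rule A_fin)
    done
  show ?thesis by (rule S.final[OF p_pos A_pos ELp Ez0p])
qed
end
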